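(* Let $B$ be a simple Bratteli diagram of strict rank $d$, let $\mathcal F$ be a skeleton on $B$ with sets $\widetilde V,\overline V$, and let $\sigma:\widetilde V\to\overline V$ be a bijection. Suppose that for all sufficiently large $n$ the graph $\mathcal H_n$ is positively strongly connected and the incidence matrix $F_n$ satisfies the balance relations $$\sum_{w\in W_{\tilde v}}\tilde f^{(n)}_{u,w}=\sum_{w\in W'_{\sigma(\tilde v)}}\bar f^{(n)}_{u,w}\qquad\text{for all }u\in V_{n+1},\ \tilde v\in\widetilde V.$$ Then there is a perfect ordering $\omega$ on $B$ whose maximal paths are exactly the $M_{\tilde v}$ ($\tilde v\in\widetilde V$), whose minimal paths are exactly the $m_{\bar v}$ ($\bar v\in\overline V$), for which $\tilde e_w$ and $\bar e_w$ are the maximal and minimal edges of $r^{-1}(w)$ for every $w\in V_n$, $n\ge2$, and whose Vershik map satisfies $\varphi_\omega(M_{\tilde v})=m_{\sigma(\tilde v)}$ for all $\tilde v\in\widetilde V$.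
   Context: A Bratteli diagram $B$ has levels $V_n$ ($V_0=\{v_0\}$) and edge sets $E_n$ from $V_{n-1}$ to $V_n$ with source/range maps $s,r$; $X_B$ is its Cantor path space; standing assumption: $B$ aperiodic. Incidence matrix $F_n=(f^{(n)}_{u,w})_{u\in V_{n+1},w\in V_n}$: number of edges from $w$ to $u$. $B$ is simple if for every $n$ there is $m>n$ with every vertex of $V_n$ joined to every vertex of $V_m$. Strict rank $d$: $|r^{-1}(v)|\ge2$ for $v\ne v_0$ and $V_n=V$, $|V|=d$, for all $n\ge1$ (levels identified). An ordering is a linear order on each $r^{-1}(v)$; it is perfect if it admits a Vershik map $\varphi_\omega$ (a homeomorphism of $X_B$ sending maximal infinite paths onto minimal ones and sending each non-maximal $x$ to the path obtained by replacing its first non-maximal edge by its successor and the preceding edges by the minimal path to the source of that successor). A path is vertical if it passes through the same vertex at every level $\ge1$. Skeleton: choose $\widetilde V,\overline V\subseteq V$ with $|\widetilde V|=|\overline V|=k\le d$; for each $\tilde v\in\widetilde V$ a vertical path $M_{\tilde v}$ through $\tilde v$ and for each $\bar v\in\overline V$ a vertical path $m_{\bar v}$ through $\bar v$, such that if $v\in\widetilde V\cap\overline V$ then $M_v,m_v$ share no edge; maps $w\mapsto\tilde v(w)\in\widetilde V$, $w\mapsto\bar v(w)\in\overline V$ on $V$; and for each $n\ge2$, $w\in V_n$, two distinct edges $\tilde e_w,\bar e_w\in r^{-1}(w)$ with $s(\tilde e_w)=\tilde v(w)$, $s(\bar e_w)=\bar v(w)$, where $\tilde e_w$ is the level-$n$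 edge of $M_w$ if $w\in\widetilde V$ and $\bar e_w$ is the level-$n$ edge of $m_w$ if $w\in\overline V$. The collection $\mathcal F$ of these paths and edges is a skeleton. $W_{\tilde v}=\{w\in V:\tilde v(w)=\tilde v\}$, $W'_{\bar v}=\{w\in V:\bar v(w)=\bar v\}$, $[\bar v,\tilde v]=W'_{\bar v}\cap W_{\tilde v}$. The associated graph $\mathcal H$ has vertices the nonempty sets $[\bar v,\tilde v]$ and a directed edge from $[\bar v,\tilde v]$ to $[\bar v_1,\tilde v_1]$ iff $\sigma(\tilde v)=\bar v_1$ (loops allowed); $\mathcal H_n$ is a copy of $\mathcal H$ whose vertices are regarded as subsets of $V_n$. For $u\in V_{n+1}$, $w\in V_n$: $\tilde f^{(n)}_{u,w}=f^{(n)}_{u,w}-1$ if $\tilde e_u$ has source $w$, else $f^{(n)}_{u,w}$; $\bar f^{(n)}_{u,w}=f^{(n)}_{u,w}-1$ if $\bar e_u$ has source $w$, else $f^{(n)}_{u,w}$. Crossing number: $P_u([\bar v,\tilde v])=\sum_{w\in[\bar v,\tilde v]}\tilde f^{(n)}_{u,w}$. $\mathcal H_n$ is positively strongly connected if for each $u\in V_{n+1}$ the subgraph of $\mathcal H_n$ induced on the vertices $t$ with $P_u(t)>0$ is strongly connected. *)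

theory Defs
  imports "HOL-Analysis.Analysis"
begin

text \<open>Level 0 is the single vertex v0, every level n >= 1 is the same finite set V.
 E n is the set of edges from level n-1 to level n (n >= 1), with source map s n and
 range map r n.  Infinite paths are maps x :: nat => 'e, x i being the edge of level i+1.\<close>

definition lvl :: "'v \<Rightarrow> 'v set \<Rightarrow> nat \<Rightarrow> 'v set" where
  "lvl v0 V n = (if n = 0 then {v0} else V)"

definition rinv :: "(nat \<Rightarrow> 'e set) \<Rightarrow> (nat \<Rightarrow> 'e \<Rightarrow> 'v) \<Rightarrow> nat \<Rightarrow> 'v \<Rightarrow> 'e set" where
  "rinv E r n v = {e \<in> E n. r n e = v}"

definition strict_rank_BD ::
  "nat \<Rightarrow> 'v \<Rightarrow> 'v set \<Rightarrow> (nat \<Rightarrow> 'e set) \<Rightarrow> (nat \<Rightarrow> 'e \<Rightarrow> 'v) \<Rightarrow> (nat \<Rightarrow> 'e \<Rightarrow> 'v) \<Rightarrow> bool" where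
  "strict_rank_BD d v0 V E s r \<longleftrightarrow>
     finite V \<and> card V = d \<and>
     (\<forall>n\<ge>1. finite (E n) \<and> (\<forall>e\<in>E n. s n e \<in> lvl v0 V (n - 1) \<and> r n e \<in> V)
        \<and> (\<forall>v\<in>V. card (rinv E r n v) \<ge> 2))"

definition finite_path ::
  "(nat \<Rightarrow> 'e set) \<Rightarrow> (nat \<Rightarrow> 'e \<Rightarrow> 'v) \<Rightarrow> (nat \<Rightarrow> 'e \<Rightarrow> 'v) \<Rightarrow> nat \<Rightarrow> 'v \<Rightarrow> nat \<Rightarrow> 'v \<Rightarrow> bool" where
  "finite_path E s r n v m w \<longleftrightarrow> n < m \<and>
     (\<exists>p :: nat \<Rightarrow> 'e. (\<forall>i. n < i \<and> i \<le> m \<longrightarrow> p i \<in> E i)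
        \<and> s (Suc n) (p (Suc n)) = v \<and> r m (p m) = w
        \<and> (\<forall>i. n < i \<and> i < m \<longrightarrow> r i (p i) = s (Suc i) (p (Suc i))))"

definition simple_BD ::
  "'v \<Rightarrow> 'v set \<Rightarrow> (nat \<Rightarrow> 'e set) \<Rightarrow> (nat \<Rightarrow> 'e \<Rightarrow> 'v) \<Rightarrow> (nat \<Rightarrow> 'e \<Rightarrow> 'v) \<Rightarrow> bool" where
  "simple_BD v0 V E s r \<longleftrightarrow>
     (\<forall>n. \<exists>m>n. \<forall>v\<in>lvl v0 V n. \<forall>w\<in>lvl v0 V m. finite_path E s r n v m w)"

definition path_space ::
  "(nat \<Rightarrow> 'e set) \<Rightarrow> (nat \<Rightarrow> 'e \<Rightarrow> 'v) \<Rightarrow> (nat \<Rightarrow> 'e \<Rightarrow> 'v) \<Rightarrow> (nat \<Rightarrow> 'e) set" where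
  "path_space E s r = {x. \<forall>i. x i \<in> E (Suc i) \<and> r (Suc i) (x i) = s (Suc (Suc i)) (x (Suc i))}"

definition path_top ::
  "(nat \<Rightarrow> 'e set) \<Rightarrow> (nat \<Rightarrow> 'e \<Rightarrow> 'v) \<Rightarrow> (nat \<Rightarrow> 'e \<Rightarrow> 'v) \<Rightarrow> (nat \<Rightarrow> 'e) topology" where
  "path_top E s r = subtopology (product_topology (\<lambda>i. discrete_topology (E (Suc i))) UNIV)
                                (path_space E s r)"

definition is_ordering ::
  "'v set \<Rightarrow> (nat \<Rightarrow> 'e set) \<Rightarrow> (nat \<Rightarrow> 'e \<Rightarrow> 'v) \<Rightarrow> (nat \<Rightarrow> 'e rel) \<Rightarrow> bool" where
  "is_ordering V E r \<omega> \<longleftrightarrow>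
     (\<forall>n\<ge>1. \<omega> n \<subseteq> {(e, e'). e \<in> E n \<and> e' \<in> E n \<and> r n e = r n e'} \<and>
        (\<forall>v\<in>V. linear_order_on (rinv E r n v) (\<omega> n \<inter> (rinv E r n v \<times> rinv E r n v))))"

definition max_edge :: "(nat \<Rightarrow> 'e set) \<Rightarrow> (nat \<Rightarrow> 'e \<Rightarrow> 'v) \<Rightarrow> (nat \<Rightarrow> 'e rel) \<Rightarrow> nat \<Rightarrow> 'e \<Rightarrow> bool" where
  "max_edge E r \<omega> n e \<longleftrightarrow> e \<in> E n \<and> (\<forall>e'\<in>E n. r n e' = r n e \<longrightarrow> (e', e) \<in> \<omega> n)"

definition min_edge :: "(nat \<Rightarrow> 'e set) \<Rightarrow> (nat \<Rightarrow> 'e \<Rightarrow> 'v) \<Rightarrow> (nat \<Rightarrow> 'e rel) \<Rightarrow> nat \<Rightarrow> 'e \<Rightarrow> bool" where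
  "min_edge E r \<omega> n e \<longleftrightarrow> e \<in> E n \<and> (\<forall>e'\<in>E n. r n e' = r n e \<longrightarrow> (e, e') \<in> \<omega> n)"

definition is_succ :: "(nat \<Rightarrow> 'e rel) \<Rightarrow> nat \<Rightarrow> 'e \<Rightarrow> 'e \<Rightarrow> bool" where
  "is_succ \<omega> n e e' \<longleftrightarrow> (e, e') \<in> \<omega> n \<and> e \<noteq> e' \<and>
     (\<forall>e''. (e, e'') \<in> \<omega> n \<and> (e'', e') \<in> \<omega> n \<longrightarrow> e'' = e \<or> e'' = e')"

definition max_paths ::
  "(nat \<Rightarrow> 'e set) \<Rightarrow> (nat \<Rightarrow> 'e \<Rightarrow> 'v) \<Rightarrow> (nat \<Rightarrow> 'e \<Rightarrow> 'v) \<Rightarrow> (nat \<Rightarrow> 'e rel) \<Rightarrow> (nat \<Rightarrow> 'e) set" where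
  "max_paths E s r \<omega> = {x \<in> path_space E s r. \<forall>i. max_edge E r \<omega> (Suc i) (x i)}"

definition min_paths ::
  "(nat \<Rightarrow> 'e set) \<Rightarrow> (nat \<Rightarrow> 'e \<Rightarrow> 'v) \<Rightarrow> (nat \<Rightarrow> 'e \<Rightarrow> 'v) \<Rightarrow> (nat \<Rightarrow> 'e rel) \<Rightarrow> (nat \<Rightarrow> 'e) set" where
  "min_paths E s r \<omega> = {x \<in> path_space E s r. \<forall>i. min_edge E r \<omega> (Suc i) (x i)}"

definition vershik_map ::
  "(nat \<Rightarrow> 'e set) \<Rightarrow> (nat \<Rightarrow> 'e \<Rightarrow> 'v) \<Rightarrow> (nat \<Rightarrow> 'e \<Rightarrow> 'v) \<Rightarrow> (nat \<Rightarrow> 'e rel)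
     \<Rightarrow> ((nat \<Rightarrow> 'e) \<Rightarrow> (nat \<Rightarrow> 'e)) \<Rightarrow> bool" where
  "vershik_map E s r \<omega> \<phi> \<longleftrightarrow>
     homeomorphic_map (path_top E s r) (path_top E s r) \<phi> \<and>
     \<phi> ` max_paths E s r \<omega> = min_paths E s r \<omega> \<and>
     (\<forall>x\<in>path_space E s r. x \<notin> max_paths E s r \<omega> \<longrightarrow>
        (let k = (LEAST i. \<not> max_edge E r \<omega> (Suc i) (x i)) in
           \<phi> x \<in> path_space E s r \<and> (\<forall>i>k. \<phi> x i = x i) \<and>
           is_succ \<omega> (Suc k) (x k) (\<phi> x k) \<and>
           (\<forall>i<k. min_edge E r \<omega> (Suc i) (\<phi> x i))))"

text \<open>Skeleton.  et n w, eb n w are the edges \<tilde>e_w, \<bar>e_w in r^{-1}(w) at level n >= 2;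
  the level-n edge of a path x is x (n-1).\<close>
definition skeleton ::
  "'v set \<Rightarrow> (nat \<Rightarrow> 'e set) \<Rightarrow> (nat \<Rightarrow> 'e \<Rightarrow> 'v) \<Rightarrow> (nat \<Rightarrow> 'e \<Rightarrow> 'v) \<Rightarrow> 'v set \<Rightarrow> 'v set
    \<Rightarrow> ('v \<Rightarrow> nat \<Rightarrow> 'e) \<Rightarrow> ('v \<Rightarrow> nat \<Rightarrow> 'e) \<Rightarrow> ('v \<Rightarrow> 'v) \<Rightarrow> ('v \<Rightarrow> 'v)
    \<Rightarrow> (nat \<Rightarrow> 'v \<Rightarrow> 'e) \<Rightarrow> (nat \<Rightarrow> 'v \<Rightarrow> 'e) \<Rightarrow> bool" where
  "skeleton V E s r Vt Vb M m vt vb et eb \<longleftrightarrow>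
     Vt \<subseteq> V \<and> Vb \<subseteq> V \<and> card Vt = card Vb \<and>
     (\<forall>v\<in>Vt. M v \<in> path_space E s r \<and> (\<forall>i. r (Suc i) (M v i) = v)) \<and>
     (\<forall>v\<in>Vb. m v \<in> path_space E s r \<and> (\<forall>i. r (Suc i) (m v i) = v)) \<and>
     (\<forall>v\<in>Vt \<inter> Vb. \<forall>i. M v i \<noteq> m v i) \<and>
     (\<forall>w\<in>V. vt w \<in> Vt \<and> vb w \<in> Vb) \<and>
     (\<forall>n\<ge>2. \<forall>w\<in>V. et n w \<in> rinv E r n w \<and> eb n w \<in> rinv E r n w \<and> et n w \<noteq> eb n w \<and>
         s n (et n w) = vt w \<and> s n (eb n w) = vb w \<and>
         (w \<in> Vt \<longrightarrow> et n w = M w (n - 1)) \<and> (w \<in> Vb \<longrightarrow> eb n w = m w (n - 1)))"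

text \<open>Incidence matrix entry f^(n)_{u,w}: edges of E (n+1) from w to u.\<close>
definition incid :: "(nat \<Rightarrow> 'e set) \<Rightarrow> (nat \<Rightarrow> 'e \<Rightarrow> 'v) \<Rightarrow> (nat \<Rightarrow> 'e \<Rightarrow> 'v) \<Rightarrow> nat \<Rightarrow> 'v \<Rightarrow> 'v \<Rightarrow> nat" where
  "incid E s r n u w = card {e \<in> E (Suc n). s (Suc n) e = w \<and> r (Suc n) e = u}"

definition incid_t :: "(nat \<Rightarrow> 'e set) \<Rightarrow> (nat \<Rightarrow> 'e \<Rightarrow> 'v) \<Rightarrow> (nat \<Rightarrow> 'e \<Rightarrow> 'v) \<Rightarrow> (nat \<Rightarrow> 'v \<Rightarrow> 'e)
     \<Rightarrow> nat \<Rightarrow> 'v \<Rightarrow> 'v \<Rightarrow> nat" where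
  "incid_t E s r et n u w = incid E s r n u w - (if s (Suc n) (et (Suc n) u) = w then 1 else 0)"

text \<open>[vb, vt] = W'_vb \<inter> W_vt.\<close>
definition cell :: "'v set \<Rightarrow> ('v \<Rightarrow> 'v) \<Rightarrow> ('v \<Rightarrow> 'v) \<Rightarrow> 'v \<Rightarrow> 'v \<Rightarrow> 'v set" where
  "cell V vt vb b t = {w \<in> V. vb w = b \<and> vt w = t}"

text \<open>Vertices of H: pairs (vb, vt) with nonempty [vb, vt] (identified with these sets).\<close>
definition H_verts :: "'v set \<Rightarrow> 'v set \<Rightarrow> 'v set \<Rightarrow> ('v \<Rightarrow> 'v) \<Rightarrow> ('v \<Rightarrow> 'v) \<Rightarrow> ('v \<times> 'v) set" where
  "H_verts V Vt Vb vt vb = {(b, t). b \<in> Vb \<and> t \<in> Vt \<and> cell V vt vb b t \<noteq> {}}"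

definition H_edges :: "'v set \<Rightarrow> 'v set \<Rightarrow> 'v set \<Rightarrow> ('v \<Rightarrow> 'v) \<Rightarrow> ('v \<Rightarrow> 'v) \<Rightarrow> ('v \<Rightarrow> 'v)
     \<Rightarrow> (('v \<times> 'v) \<times> ('v \<times> 'v)) set" where
  "H_edges V Vt Vb vt vb \<sigma> = {((b, t), (b1, t1)). (b, t) \<in> H_verts V Vt Vb vt vb \<and>
        (b1, t1) \<in> H_verts V Vt Vb vt vb \<and> \<sigma> t = b1}"

definition crossing :: "'v set \<Rightarrow> (nat \<Rightarrow> 'e set) \<Rightarrow> (nat \<Rightarrow> 'e \<Rightarrow> 'v) \<Rightarrow> (nat \<Rightarrow> 'e \<Rightarrow> 'v)
     \<Rightarrow> ('v \<Rightarrow> 'v) \<Rightarrow> ('v \<Rightarrow> 'v) \<Rightarrow> (nat \<Rightarrow> 'v \<Rightarrow> 'e) \<Rightarrow> nat \<Rightarrow> 'v \<Rightarrow> 'v \<times> 'v \<Rightarrow> nat" where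
  "crossing V E s r vt vb et n u p = (\<Sum>w\<in>cell V vt vb (fst p) (snd p). incid_t E s r et n u w)"

definition pos_strongly_connected ::
  "'v set \<Rightarrow> (nat \<Rightarrow> 'e set) \<Rightarrow> (nat \<Rightarrow> 'e \<Rightarrow> 'v) \<Rightarrow> (nat \<Rightarrow> 'e \<Rightarrow> 'v) \<Rightarrow> 'v set \<Rightarrow> 'v set
     \<Rightarrow> ('v \<Rightarrow> 'v) \<Rightarrow> ('v \<Rightarrow> 'v) \<Rightarrow> (nat \<Rightarrow> 'v \<Rightarrow> 'e) \<Rightarrow> ('v \<Rightarrow> 'v) \<Rightarrow> nat \<Rightarrow> bool" where
  "pos_strongly_connected V E s r Vt Vb vt vb et \<sigma> n \<longleftrightarrow>
     (\<forall>u\<in>V. let T = {p \<in> H_verts V Vt Vb vt vb. crossing V E s r vt vb et n u p > 0} in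
        \<forall>a\<in>T. \<forall>b\<in>T. (a, b) \<in> (H_edges V Vt Vb vt vb \<sigma> \<inter> (T \<times> T))\<^sup>*)"

end

theory Submission
  imports Defs
begin

definition closed_chain :: "('a \<Rightarrow> 'a \<Rightarrow> bool) \<Rightarrow> 'a list \<Rightarrow> bool" where
  "closed_chain R W \<longleftrightarrow> W \<noteq> [] \<and> successively R W \<and> R (last W) (hd W)"

lemma closed_chain_rotate1:
  assumes "closed_chain R W" shows "closed_chain R (rotate1 W)"
proof (cases W)
  case Nil then show ?thesis using assms by (simp add: closed_chain_def)
next
  case (Cons a xs)
  show ?thesis
  proof (cases "xs = []")
    case True then show ?thesis using assms Cons by simp
  next
    case False
    then show ?thesis using assms Cons
      by (auto simp: closed_chain_def successively_append_iff successively_Cons)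
  qed
qed

lemma closed_chain_rotate:
  assumes "closed_chain R W" shows "closed_chain R (rotate n W)"
  using assms by (induction n) (auto intro: closed_chain_rotate1)

lemma count_chain:
  assumes "successively (\<lambda>x y. t x = h y) W" "W \<noteq> []"
  shows "length (filter (\<lambda>a. h a = z) W) + (if t (last W) = z then 1 else 0)
       = length (filter (\<lambda>a. t a = z) W) + (if h (hd W) = z then 1 else 0)"
  using assms
proof (induction W rule: induct_list012)
  case (3 x y zs)
  then show ?case by (auto simp: successively_Cons)
qed auto

lemma len_filter_distinct:
  "distinct W \<Longrightarrow> length (filter P W) = card {a \<in> set W. P a}"
  by (metis distinct_card distinct_filter set_filter)

lemma euler_circuit:
  fixes A :: "'a set" and h t :: "'a \<Rightarrow> 'b"
  assumes finA: "finite A" and a0: "a0 \<in> A"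
    and bal: "\<And>z. card {a\<in>A. h a = z} = card {a\<in>A. t a = z}"
    and cut: "\<And>U. a0 \<in> U \<Longrightarrow> U \<subseteq> A \<Longrightarrow> U \<noteq> A \<Longrightarrow> \<exists>x\<in>U. \<exists>y\<in>A-U. t x = h y"
  shows "\<exists>W. distinct W \<and> set W = A \<and> hd W = a0 \<and> closed_chain (\<lambda>x y. t x = h y) W"
proof -
  define R where "R = (\<lambda>x y. t x = h y)"
  define P where "P = (\<lambda>W. distinct W \<and> set W \<subseteq> A \<and> a0 \<in> set W \<and> successively R W)"
  have P0: "P [a0]" using a0 by (simp add: P_def)
  have bound: "\<forall>W. P W \<longrightarrow> length W \<le> card A"
    unfolding P_def by (metis card_mono distinct_card finA)
  have "\<exists>l. (\<exists>W. P W \<and> length W = l) \<and> (\<forall>l'. (\<exists>W. P W \<and> length W = l') \<longrightarrow> l' \<le> l)"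
    apply (rule Nat.ex_has_greatest_nat[where k=1 and b="card A"])
    using P0 bound by auto
  then obtain W where PW: "P W" and maxW: "\<And>W'. P W' \<Longrightarrow> length W' \<le> length W"
    by blast
  have Wne: "W \<noteq> []" using PW by (auto simp: P_def)
  have closed: "t (last W) = h (hd W)"
  proof (rule ccontr)
    assume nc: "t (last W) \<noteq> h (hd W)"
    define z where "z = t (last W)"
    have dW: "distinct W" and sW: "set W \<subseteq> A" and cW: "successively R W" using PW by (auto simp: P_def)
    have "length (filter (\<lambda>a. h a = z) W) + 1 = length (filter (\<lambda>a. t a = z) W)"
      using count_chain[of t h W z] cW Wne nc unfolding R_def z_def by auto
    hence c1: "card {a\<in>set W. h a = z} + 1 = card {a\<in>set W. t a = z}"
      using dW by (simp add: len_filter_distinct)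
    have "card {a\<in>set W. t a = z} \<le> card {a\<in>A. t a = z}"
      by (rule card_mono) (use finA sW in auto)
    hence lt: "card {a\<in>set W. h a = z} < card {a\<in>A. h a = z}" using c1 bal by simp
    have "\<not> {a\<in>A. h a = z} \<subseteq> {a\<in>set W. h a = z}"
    proof
      assume "{a\<in>A. h a = z} \<subseteq> {a\<in>set W. h a = z}"
      hence "card {a\<in>A. h a = z} \<le> card {a\<in>set W. h a = z}"
        by (intro card_mono) auto
      thus False using lt by simp
    qed
    then obtain y where y: "y \<in> A" "h y = z" "y \<notin> set W" by auto
    have "P (W @ [y])" using PW y Wne unfolding P_def R_def z_def
      by (auto simp: successively_append_iff)
    from maxW[OF this] show False by simp
  qed
  have ccW: "closed_chain R W" using closed Wne PW by (auto simp: closed_chain_def P_def R_def)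
  have cover: "set W = A"
  proof (rule ccontr)
    assume ne: "set W \<noteq> A"
    from cut[of "set W"] ne PW obtain x y where xy: "x \<in> set W" "y \<in> A" "y \<notin> set W" "t x = h y"
      by (auto simp: P_def)
    obtain i where i: "i < length W" "W ! i = x" by (meson in_set_conv_nth xy(1))
    define W' where "W' = rotate (Suc i) W"
    have cc': "closed_chain R W'" unfolding W'_def by (rule closed_chain_rotate[OF ccW])
    have lastW': "last W' = x"
    proof (cases "Suc i = length W")
      case True
      then have "W' = W" unfolding W'_def by (simp add: rotate_drop_take)
      then show ?thesis using True i by (metis Wne diff_Suc_1 last_conv_nth)
    next
      case False
      then have "Suc i mod length W = Suc i" using i by simp
      then have "W' = drop (Suc i) W @ take (Suc i) W" unfolding W'_def by (simp add: rotate_drop_take)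
      then show ?thesis using i by (simp add: take_Suc_conv_app_nth)
    qed
    have "P (W' @ [y])" using PW xy cc' lastW' unfolding P_def W'_def R_def
      by (auto simp: successively_append_iff closed_chain_def)
    from maxW[OF this] show False by (simp add: W'_def)
  qed
  obtain j where j: "j < length W" "W ! j = a0" using a0 cover by (metis in_set_conv_nth)
  define W' where "W' = rotate j W"
  have "hd W' = a0" unfolding W'_def using j
    by (simp add: rotate_drop_take hd_append hd_drop_conv_nth)
  moreover have "closed_chain R W'" unfolding W'_def by (rule closed_chain_rotate[OF ccW])
  moreover have "distinct W'" "set W' = A" using PW cover by (auto simp: W'_def P_def)
  ultimately show ?thesis unfolding R_def by blast
qed

lemma euler_trail:
  fixes A :: "'a set" and h t :: "'a \<Rightarrow> 'b"
  assumes finA: "finite A" and a0: "a0 \<in> A" and a1: "a1 \<in> A" and a01: "a0 \<noteq> a1"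
    and bal: "\<And>z. card {a\<in>A-{a0}. h a = z} = card {a\<in>A-{a1}. t a = z}"
    and cut: "\<And>U. a0 \<in> U \<Longrightarrow> U \<subseteq> A-{a1} \<Longrightarrow> U \<noteq> A-{a1} \<Longrightarrow> \<exists>x\<in>U. \<exists>y\<in>(A-{a1})-U. t x = h y"
  shows "\<exists>L. distinct L \<and> set L = A \<and> hd L = a0 \<and> last L = a1 \<and> successively (\<lambda>x y. t x = h y) L"
proof -
  define h' where "h' = h(a0 := h a1)"
  have bal': "card {a\<in>A-{a1}. h' a = z} = card {a\<in>A-{a1}. t a = z}" for z
  proof -
    define B where "B = {a\<in>A-{a0,a1}. h a = z}"
    have fB: "finite B" using finA by (simp add: B_def)
    have e1: "{a\<in>A-{a1}. h' a = z} = (if h a1 = z then insert a0 B else B)"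
      using a0 a01 by (auto simp: B_def h'_def)
    have e2: "{a\<in>A-{a0}. h a = z} = (if h a1 = z then insert a1 B else B)"
      using a1 a01 by (auto simp: B_def)
    have "a0 \<notin> B" "a1 \<notin> B" by (auto simp: B_def)
    hence "card {a\<in>A-{a1}. h' a = z} = card {a\<in>A-{a0}. h a = z}"
      unfolding e1 e2 using fB by auto
    thus ?thesis using bal by simp
  qed
  have cut': "\<exists>x\<in>U. \<exists>y\<in>(A-{a1})-U. t x = h' y"
    if "a0 \<in> U" "U \<subseteq> A-{a1}" "U \<noteq> A-{a1}" for U
    using cut[OF that] that(1) by (auto simp: h'_def)
  obtain W where W: "distinct W" "set W = A-{a1}" "hd W = a0" "closed_chain (\<lambda>x y. t x = h' y) W"
    using euler_circuit[of "A-{a1}" a0 h' t, OF _ _ bal' cut'] finA a0 a01 by blast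
  obtain W'' where W'': "W = a0 # W''" using W(3,4) by (cases W) (auto simp: closed_chain_def)
  have nin: "a0 \<notin> set W''" using W(1) W'' by simp
  have s1: "successively (\<lambda>x y. t x = h' y) W" using W(4) by (simp add: closed_chain_def)
  have s2: "successively (\<lambda>x y. t x = h y) W''"
  proof -
    have "successively (\<lambda>x y. t x = h' y) W''" using s1 W'' by (cases W'') auto
    moreover have "successively (\<lambda>x y. t x = h' y) W'' = successively (\<lambda>x y. t x = h y) W''"
      by (rule successively_cong) (use nin in \<open>auto simp: h'_def\<close>)
    ultimately show ?thesis by simp
  qed
  have s3: "successively (\<lambda>x y. t x = h y) W"
  proof (cases W'')
    case Nil then show ?thesis using W'' by simp
  next
    case (Cons b bs)
    then have "b \<noteq> a0" using nin by auto
    have "t a0 = h' b" using s1 W'' Cons by simp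
    hence "t a0 = h b" using \<open>b \<noteq> a0\<close> by (simp add: h'_def)
    then show ?thesis using s2 W'' Cons by simp
  qed
  have cl: "t (last W) = h a1" using W(3,4) by (simp add: closed_chain_def h'_def)
  define L where "L = W @ [a1]"
  have "successively (\<lambda>x y. t x = h y) L" using s3 cl by (simp add: L_def successively_append_iff)
  moreover have "distinct L" "set L = A" "hd L = a0" "last L = a1"
    using W a1 W'' by (auto simp: L_def)
  ultimately show ?thesis by blast
qed


definition consec :: "'a list \<Rightarrow> 'a \<Rightarrow> 'a \<Rightarrow> bool" where
  "consec xs a b \<longleftrightarrow> (\<exists>i. Suc i < length xs \<and> xs ! i = a \<and> xs ! Suc i = b)"

lemma consec_mem: "consec xs a b \<Longrightarrow> a \<in> set xs \<and> b \<in> set xs"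
  by (auto simp: consec_def)

lemma consec_uniq1: "distinct xs \<Longrightarrow> consec xs a b \<Longrightarrow> consec xs a b' \<Longrightarrow> b = b'"
  unfolding consec_def using nth_eq_iff_index_eq by (metis Suc_lessD)

lemma consec_uniq2: "distinct xs \<Longrightarrow> consec xs a b \<Longrightarrow> consec xs a' b \<Longrightarrow> a = a'"
  unfolding consec_def using nth_eq_iff_index_eq by (metis Suc_lessD Suc_inject)

lemma consec_neq: "distinct xs \<Longrightarrow> consec xs a b \<Longrightarrow> a \<noteq> b"
  unfolding consec_def using nth_eq_iff_index_eq by (metis Suc_lessD n_not_Suc_n)

lemma consec_not_last: "distinct xs \<Longrightarrow> consec xs a b \<Longrightarrow> a \<noteq> last xs"
proof
  assume d: "distinct xs" and c: "consec xs a b" and e: "a = last xs"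
  then obtain i where i: "Suc i < length xs" "xs ! i = a" by (auto simp: consec_def)
  have "xs \<noteq> []" using i by auto
  hence "last xs = xs ! (length xs - 1)" by (simp add: last_conv_nth)
  hence "xs ! i = xs ! (length xs - 1)" using i e by simp
  hence "i = length xs - 1" using d i by (simp add: nth_eq_iff_index_eq)
  thus False using i by simp
qed

lemma consec_not_hd: "distinct xs \<Longrightarrow> consec xs a b \<Longrightarrow> b \<noteq> hd xs"
proof
  assume d: "distinct xs" and c: "consec xs a b" and e: "b = hd xs"
  then obtain i where i: "Suc i < length xs" "xs ! Suc i = b" by (auto simp: consec_def)
  have "xs \<noteq> []" using i by auto
  hence "hd xs = xs ! 0" by (simp add: hd_conv_nth)
  hence "xs ! Suc i = xs ! 0" using i e by simp
  moreover have "(xs ! Suc i = xs ! 0) = (Suc i = 0)" by (rule nth_eq_iff_index_eq[OF d]) (use i in auto)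
  ultimately show False by simp
qed

lemma consec_ex_succ: "a \<in> set xs \<Longrightarrow> a \<noteq> last xs \<Longrightarrow> \<exists>b. consec xs a b"
proof -
  assume a: "a \<in> set xs" "a \<noteq> last xs"
  then obtain i where i: "i < length xs" "xs ! i = a" by (meson in_set_conv_nth)
  have "i \<noteq> length xs - 1" using i a by (metis last_conv_nth list.size(3) not_less0)
  hence "Suc i < length xs" using i by simp
  thus ?thesis using i unfolding consec_def by blast
qed

lemma consec_ex_pred: "b \<in> set xs \<Longrightarrow> b \<noteq> hd xs \<Longrightarrow> \<exists>a. consec xs a b"
proof -
  assume a: "b \<in> set xs" "b \<noteq> hd xs"
  then obtain j where j: "j < length xs" "xs ! j = b" by (meson in_set_conv_nth)
  have "j \<noteq> 0" using j a by (metis hd_conv_nth list.size(3) not_less0)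
  then obtain i where "j = Suc i" by (cases j) auto
  thus ?thesis using j unfolding consec_def by blast
qed

lemma consec_succ: "successively P xs \<Longrightarrow> consec xs a b \<Longrightarrow> P a b"
  unfolding consec_def using successively_nth by blast

lemma consec_rev: "consec (rev xs) a b \<longleftrightarrow> consec xs b a"
proof
  assume "consec (rev xs) a b"
  then obtain i where i: "Suc i < length xs" "rev xs ! i = a" "rev xs ! Suc i = b" by (auto simp: consec_def)
  define j where "j = length xs - Suc (Suc i)"
  have "xs ! j = b" "xs ! Suc j = a" using i by (auto simp: rev_nth j_def Suc_diff_Suc)
  moreover have "Suc j < length xs" using i by (simp add: j_def)
  ultimately show "consec xs b a" unfolding consec_def by blast
next
  assume "consec xs b a"
  then obtain i where i: "Suc i < length xs" "xs ! i = b" "xs ! Suc i = a" by (auto simp: consec_def)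
  define j where "j = length xs - Suc (Suc i)"
  have "rev xs ! j = a" "rev xs ! Suc j = b" using i by (auto simp: rev_nth j_def Suc_diff_Suc)
  moreover have "Suc j < length xs" using i by (simp add: j_def)
  ultimately show "consec (rev xs) a b" unfolding consec_def by auto
qed


lemma psD: "x \<in> path_space E s r \<Longrightarrow> x i \<in> E (Suc i) \<and> r (Suc i) (x i) = s (Suc (Suc i)) (x (Suc i))"
  by (simp add: path_space_def)

locale vsetup =
  fixes V :: "'v set" and E :: "nat \<Rightarrow> 'e set" and s r :: "nat \<Rightarrow> 'e \<Rightarrow> 'v"
    and Vt Vb :: "'v set" and M m :: "'v \<Rightarrow> nat \<Rightarrow> 'e" and vt vb :: "'v \<Rightarrow> 'v"
    and et eb :: "nat \<Rightarrow> 'v \<Rightarrow> 'e" and \<sigma> :: "'v \<Rightarrow> 'v" and L :: "nat \<Rightarrow> 'v \<Rightarrow> 'e list" and K :: nat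
  assumes Erng: "\<And>n e. 1 \<le> n \<Longrightarrow> e \<in> E n \<Longrightarrow> r n e \<in> V"
    and Esrc: "\<And>n e. 2 \<le> n \<Longrightarrow> e \<in> E n \<Longrightarrow> s n e \<in> V"
    and skel: "skeleton V E s r Vt Vb M m vt vb et eb"
    and sigma: "bij_betw \<sigma> Vt Vb"
    and Ldist: "\<And>n u. 1 \<le> n \<Longrightarrow> u \<in> V \<Longrightarrow> distinct (L n u)"
    and Lset: "\<And>n u. 1 \<le> n \<Longrightarrow> u \<in> V \<Longrightarrow> set (L n u) = rinv E r n u"
    and Lne: "\<And>n u. 1 \<le> n \<Longrightarrow> u \<in> V \<Longrightarrow> L n u \<noteq> []"
    and L1t: "\<And>u. u \<in> Vt \<Longrightarrow> last (L 1 u) = M u 0"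
    and L1b: "\<And>u. u \<in> Vb \<Longrightarrow> hd (L 1 u) = m u 0"
    and L2t: "\<And>n u. 2 \<le> n \<Longrightarrow> u \<in> V \<Longrightarrow> last (L n u) = et n u"
    and L2b: "\<And>n u. 2 \<le> n \<Longrightarrow> u \<in> V \<Longrightarrow> hd (L n u) = eb n u"
    and good: "\<And>n u. K \<le> n \<Longrightarrow> u \<in> V \<Longrightarrow> successively (\<lambda>e e'. \<sigma> (vt (s n e)) = vb (s n e')) (L n u)"
    and K2: "2 \<le> K"
begin

lemma VtV: "Vt \<subseteq> V" and VbV: "Vb \<subseteq> V"
  using skel by (auto simp: skeleton_def)
lemma Mps: "t \<in> Vt \<Longrightarrow> M t \<in> path_space E s r" and Mr: "t \<in> Vt \<Longrightarrow> r (Suc i) (M t i) = t"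
  using skel by (auto simp: skeleton_def)
lemma mps: "t \<in> Vb \<Longrightarrow> m t \<in> path_space E s r" and mr: "t \<in> Vb \<Longrightarrow> r (Suc i) (m t i) = t"
  using skel by (auto simp: skeleton_def)
lemma vtV: "w \<in> V \<Longrightarrow> vt w \<in> Vt" and vbV: "w \<in> V \<Longrightarrow> vb w \<in> Vb"
  using skel by (auto simp: skeleton_def)
lemma et_in: "2 \<le> n \<Longrightarrow> w \<in> V \<Longrightarrow> et n w \<in> E n \<and> r n (et n w) = w \<and> s n (et n w) = vt w"
  using skel by (auto simp: skeleton_def rinv_def)
lemma eb_in: "2 \<le> n \<Longrightarrow> w \<in> V \<Longrightarrow> eb n w \<in> E n \<and> r n (eb n w) = w \<and> s n (eb n w) = vb w"
  using skel by (auto simp: skeleton_def rinv_def)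
lemma etM: "2 \<le> n \<Longrightarrow> w \<in> Vt \<Longrightarrow> et n w = M w (n - 1)"
  using skel VtV by (auto simp: skeleton_def)
lemma ebm: "2 \<le> n \<Longrightarrow> w \<in> Vb \<Longrightarrow> eb n w = m w (n - 1)"
  using skel VbV by (auto simp: skeleton_def)
lemma etneb: "2 \<le> n \<Longrightarrow> w \<in> V \<Longrightarrow> et n w \<noteq> eb n w"
  using skel by (auto simp: skeleton_def)

lemma Ms: "t \<in> Vt \<Longrightarrow> 1 \<le> j \<Longrightarrow> s (Suc j) (M t j) = t"
proof -
  assume t: "t \<in> Vt" and j: "1 \<le> j"
  then obtain j' where j': "j = Suc j'" by (cases j) auto
  show ?thesis using psD[OF Mps[OF t], of j'] Mr[OF t, of j'] j' by simp
qed
lemma ms: "t \<in> Vb \<Longrightarrow> 1 \<le> j \<Longrightarrow> s (Suc j) (m t j) = t"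
proof -
  assume t: "t \<in> Vb" and j: "1 \<le> j"
  then obtain j' where j': "j = Suc j'" by (cases j) auto
  show ?thesis using psD[OF mps[OF t], of j'] mr[OF t, of j'] j' by simp
qed

lemma vt_id: "t \<in> Vt \<Longrightarrow> vt t = t"
  using et_in[of 2 t] etM[of 2 t] Ms[of t 1] VtV by (auto simp: numeral_2_eq_2)
lemma vb_id: "t \<in> Vb \<Longrightarrow> vb t = t"
  using eb_in[of 2 t] ebm[of 2 t] ms[of t 1] VbV by (auto simp: numeral_2_eq_2)

lemma Lmem: "1 \<le> n \<Longrightarrow> u \<in> V \<Longrightarrow> e \<in> set (L n u) \<longleftrightarrow> e \<in> E n \<and> r n e = u"
  using Lset by (auto simp: rinv_def)

definition ismax :: "nat \<Rightarrow> 'e \<Rightarrow> bool" where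
  "ismax n e \<longleftrightarrow> e \<in> E n \<and> e = last (L n (r n e))"
definition ismin :: "nat \<Rightarrow> 'e \<Rightarrow> bool" where
  "ismin n e \<longleftrightarrow> e \<in> E n \<and> e = hd (L n (r n e))"

lemma maxM: "t \<in> Vt \<Longrightarrow> ismax (Suc j) e \<Longrightarrow> r (Suc j) e = t \<Longrightarrow> e = M t j"
proof (cases j)
  case 0
  then show "t \<in> Vt \<Longrightarrow> ismax (Suc j) e \<Longrightarrow> r (Suc j) e = t \<Longrightarrow> e = M t j"
    using L1t by (auto simp: ismax_def)
next
  case (Suc j')
  assume "t \<in> Vt" "ismax (Suc j) e" "r (Suc j) e = t"
  then show ?thesis using L2t[of "Suc j" t] etM[of "Suc j" t] VtV Suc by (auto simp: ismax_def)
qed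

lemma minm: "t \<in> Vb \<Longrightarrow> ismin (Suc j) e \<Longrightarrow> r (Suc j) e = t \<Longrightarrow> e = m t j"
proof (cases j)
  case 0
  then show "t \<in> Vb \<Longrightarrow> ismin (Suc j) e \<Longrightarrow> r (Suc j) e = t \<Longrightarrow> e = m t j"
    using L1b by (auto simp: ismin_def)
next
  case (Suc j')
  assume "t \<in> Vb" "ismin (Suc j) e" "r (Suc j) e = t"
  then show ?thesis using L2b[of "Suc j" t] ebm[of "Suc j" t] VbV Suc by (auto simp: ismin_def)
qed

lemma Mmax: "t \<in> Vt \<Longrightarrow> ismax (Suc j) (M t j)"
proof -
  assume t: "t \<in> Vt"
  have E: "M t j \<in> E (Suc j)" using psD[OF Mps[OF t]] by blast
  have "M t j = last (L (Suc j) t)"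
  proof (cases j)
    case 0 then show ?thesis using L1t[OF t] by simp
  next
    case (Suc j') then show ?thesis using L2t[of "Suc j" t] etM[of "Suc j" t] t VtV by auto
  qed
  thus ?thesis unfolding ismax_def Mr[OF t] using E by simp
qed

lemma mmin: "t \<in> Vb \<Longrightarrow> ismin (Suc j) (m t j)"
proof -
  assume t: "t \<in> Vb"
  have E: "m t j \<in> E (Suc j)" using psD[OF mps[OF t]] by blast
  have "m t j = hd (L (Suc j) t)"
  proof (cases j)
    case 0 then show ?thesis using L1b[OF t] by simp
  next
    case (Suc j') then show ?thesis using L2b[of "Suc j" t] ebm[of "Suc j" t] t VbV by auto
  qed
  thus ?thesis unfolding ismin_def mr[OF t] using E by simp
qed

lemma maxbelow:
  assumes x: "x \<in> path_space E s r"
  shows "(\<forall>i<k. ismax (Suc i) (x i)) \<Longrightarrow> Suc j < k \<Longrightarrow>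
     r (Suc j) (x j) = vt (r k (x (k - 1))) \<and> x j = M (vt (r k (x (k - 1)))) j"
proof (induction k arbitrary: j)
  case 0 then show ?case by simp
next
  case (Suc k)
  define u where "u = (\<lambda>i. r (Suc i) (x i))"
  have uV: "u i \<in> V" for i unfolding u_def by (rule Erng) (use psD[OF x, of i] in auto)
  have k1: "1 \<le> k" using Suc.prems by simp
  then obtain k' where k': "k = Suc k'" by (cases k) auto
  have xk: "ismax (Suc k) (x k)" using Suc.prems by simp
  have "x k = et (Suc k) (u k)" using xk L2t[of "Suc k" "u k"] uV k1 by (simp add: ismax_def u_def)
  hence "s (Suc k) (x k) = vt (u k)" using et_in[of "Suc k" "u k"] uV k1 by simp
  moreover have "s (Suc k) (x k) = u k'" using psD[OF x, of k'] k' by (simp add: u_def)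
  ultimately have ukk: "u k' = vt (u k)" by simp
  show ?case
  proof (cases "j = k'")
    case True
    have "x j = M (vt (u k)) j"
      using maxM[of "vt (u k)" j "x j"] Suc.prems True ukk vtV[OF uV] k' by (simp add: u_def)
    then have "u j = vt (u k) \<and> x j = M (vt (u k)) j" using True ukk by simp
    then show ?thesis unfolding u_def diff_Suc_1 .
  next
    case False
    hence "Suc j < k" using Suc.prems k' by simp
    have pre: "\<forall>i<k. ismax (Suc i) (x i)" using Suc.prems by simp
    have IH: "u j = vt (u k') \<and> x j = M (vt (u k')) j"
      using Suc.IH[OF pre \<open>Suc j < k\<close>] unfolding u_def k' diff_Suc_1 .
    have "vt (u k') = vt (u k)" using ukk vt_id[OF vtV[OF uV]] by simp
    then have "u j = vt (u k) \<and> x j = M (vt (u k)) j" using IH by metis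
    then show ?thesis unfolding u_def diff_Suc_1 .
  qed
qed

lemma maxpaths_char: "{x \<in> path_space E s r. \<forall>i. ismax (Suc i) (x i)} = M ` Vt"
proof
  show "M ` Vt \<subseteq> {x \<in> path_space E s r. \<forall>i. ismax (Suc i) (x i)}"
    using Mps Mmax by auto
next
  show "{x \<in> path_space E s r. \<forall>i. ismax (Suc i) (x i)} \<subseteq> M ` Vt"
  proof
    fix x assume "x \<in> {x \<in> path_space E s r. \<forall>i. ismax (Suc i) (x i)}"
    hence x: "x \<in> path_space E s r" and mx: "\<forall>i. ismax (Suc i) (x i)" by auto
    define u where "u = (\<lambda>i. r (Suc i) (x i))"
    have uV: "u i \<in> V" for i unfolding u_def by (rule Erng) (use psD[OF x, of i] in auto)
    have A: "u j = vt (u (Suc j)) \<and> x j = M (vt (u (Suc j))) j" for j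
      using maxbelow[OF x, of "Suc (Suc j)" j] mx unfolding u_def diff_Suc_1 by blast
    have ut: "u j \<in> Vt" for j using A[of j] vtV[OF uV] by metis
    have uc: "u j = u (Suc j)" for j using A[of j] vt_id[OF ut[of "Suc j"]] by simp
    have u0: "u j = u 0" for j by (induction j) (use uc in auto)
    have "x j = M (u 0) j" for j using A[of j] vt_id[OF ut[of "Suc j"]] u0[of "Suc j"] by simp
    hence "x = M (u 0)" by auto
    thus "x \<in> M ` Vt" using ut[of 0] by blast
  qed
qed

end

lemma topspace_path_top: "topspace (path_top E s r) = path_space E s r"
  unfolding path_top_def by (auto simp: path_space_def PiE_UNIV_domain)

lemma cyl_open:
  assumes x: "x \<in> path_space E s r"
  shows "openin (path_top E s r) {y \<in> path_space E s r. \<forall>j<n. y j = x j}"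
proof -
  define P where "P = product_topology (\<lambda>i. discrete_topology (E (Suc i))) (UNIV :: nat set)"
  have U: "openin P {y \<in> topspace P. \<forall>j<n. y j = x j}"
  proof (induction n)
    case 0 then show ?case by simp
  next
    case (Suc n)
    have xn: "x n \<in> E (Suc n)" using x by (simp add: path_space_def)
    have cm: "continuous_map P (discrete_topology (E (Suc n))) (\<lambda>y. y n)"
      unfolding P_def by (rule continuous_map_product_projection) simp
    have op: "openin (discrete_topology (E (Suc n))) {x n}" using xn by simp
    have "openin P {y \<in> topspace P. y n \<in> {x n}}" by (rule openin_continuous_map_preimage[OF cm op])
    hence "openin P ({y \<in> topspace P. \<forall>j<n. y j = x j} \<inter> {y \<in> topspace P. y n \<in> {x n}})"
      using Suc.IH by (rule openin_Int[rotated])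
    moreover have "{y \<in> topspace P. \<forall>j<n. y j = x j} \<inter> {y \<in> topspace P. y n \<in> {x n}}
        = {y \<in> topspace P. \<forall>j<Suc n. y j = x j}" by (auto simp: less_Suc_eq)
    ultimately show ?case by simp
  qed
  have sub: "path_space E s r \<subseteq> topspace P" by (auto simp: P_def path_space_def PiE_UNIV_domain)
  have "{y \<in> path_space E s r. \<forall>j<n. y j = x j} = {y \<in> topspace P. \<forall>j<n. y j = x j} \<inter> path_space E s r"
    using sub by auto
  thus ?thesis unfolding path_top_def openin_subtopology P_def[symmetric] using U by blast
qed

lemma cont_crit:
  assumes maps: "\<And>x. x \<in> path_space E s r \<Longrightarrow> f x \<in> path_space E s r"
    and loc: "\<And>x i. x \<in> path_space E s r \<Longrightarrow> \<exists>n. \<forall>y\<in>path_space E s r. (\<forall>j<n. y j = x j) \<longrightarrow> f y i = f x i"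
  shows "continuous_map (path_top E s r) (path_top E s r) f"
proof -
  have T: "topspace (path_top E s r) = path_space E s r" by (rule topspace_path_top)
  have comp: "continuous_map (path_top E s r) (discrete_topology (E (Suc k))) (\<lambda>x. f x k)" for k
    unfolding continuous_map
  proof (intro conjI allI impI)
    have "f x k \<in> E (Suc k)" if "x \<in> path_space E s r" for x
      using maps[OF that] unfolding path_space_def by blast
    then show "(\<lambda>x. f x k) ` topspace (path_top E s r) \<subseteq> topspace (discrete_topology (E (Suc k)))"
      unfolding T by auto
    fix U assume "openin (discrete_topology (E (Suc k))) U"
    show "openin (path_top E s r) {x \<in> topspace (path_top E s r). f x k \<in> U}"
      unfolding T
    proof (subst openin_subopen, intro ballI)
      fix x assume xin: "x \<in> {x \<in> path_space E s r. f x k \<in> U}"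
      hence x: "x \<in> path_space E s r" "f x k \<in> U" by auto
      obtain n where n: "\<forall>y\<in>path_space E s r. (\<forall>j<n. y j = x j) \<longrightarrow> f y k = f x k"
        using loc[OF x(1)] by blast
      have sub: "{y \<in> path_space E s r. \<forall>j<n. y j = x j} \<subseteq> {x \<in> path_space E s r. f x k \<in> U}"
        using n x(2) by auto
      have xi: "x \<in> {y \<in> path_space E s r. \<forall>j<n. y j = x j}" using x(1) by simp
      show "\<exists>T. openin (path_top E s r) T \<and> x \<in> T \<and> T \<subseteq> {x \<in> path_space E s r. f x k \<in> U}"
        using cyl_open[OF x(1), of n] xi sub by blast
    qed
  qed
  have "continuous_map (path_top E s r) (product_topology (\<lambda>i. discrete_topology (E (Suc i))) UNIV) f"
    unfolding continuous_map_componentwise_UNIV using comp by blast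
  moreover have "f \<in> topspace (path_top E s r) \<rightarrow> path_space E s r" using maps unfolding T by blast
  ultimately have "continuous_map (path_top E s r) (subtopology (product_topology (\<lambda>i. discrete_topology (E (Suc i))) UNIV) (path_space E s r)) f"
    using continuous_map_in_subtopology by blast
  then show ?thesis unfolding path_top_def .
qed


context vsetup begin

fun dnmin :: "nat \<Rightarrow> 'v \<Rightarrow> nat \<Rightarrow> 'e" where
  "dnmin 0 w i = undefined"
| "dnmin (Suc k) w i = (if i = k then hd (L (Suc k) w) else dnmin k (s (Suc k) (hd (L (Suc k) w))) i)"

fun dnmax :: "nat \<Rightarrow> 'v \<Rightarrow> nat \<Rightarrow> 'e" where
  "dnmax 0 w i = undefined"
| "dnmax (Suc k) w i = (if i = k then last (L (Suc k) w) else dnmax k (s (Suc k) (last (L (Suc k) w))) i)"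

lemma hdL: "1 \<le> n \<Longrightarrow> u \<in> V \<Longrightarrow> hd (L n u) \<in> E n \<and> r n (hd (L n u)) = u"
  using Lmem[of n u "hd (L n u)"] Lne[of n u] by simp
lemma lastL: "1 \<le> n \<Longrightarrow> u \<in> V \<Longrightarrow> last (L n u) \<in> E n \<and> r n (last (L n u)) = u"
  using Lmem[of n u "last (L n u)"] Lne[of n u] by simp

lemma dnmin_props:
  "w \<in> V \<Longrightarrow> (i < k \<longrightarrow> dnmin k w i \<in> E (Suc i) \<and> ismin (Suc i) (dnmin k w i))
     \<and> (k = Suc i \<longrightarrow> r k (dnmin k w i) = w)
     \<and> (Suc i < k \<longrightarrow> r (Suc i) (dnmin k w i) = s (Suc (Suc i)) (dnmin k w (Suc i)))"
proof (induction k arbitrary: w i)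
  case 0 then show ?case by simp
next
  case (Suc k)
  define h where "h = hd (L (Suc k) w)"
  have h: "h \<in> E (Suc k)" "r (Suc k) h = w" using hdL[of "Suc k" w] Suc.prems by (auto simp: h_def)
  have hmin: "ismin (Suc k) h" using h by (simp add: ismin_def h_def)
  show ?case
  proof (cases "i = k")
    case True then show ?thesis using h hmin by (simp add: h_def[symmetric])
  next
    case False
    show ?thesis
    proof (cases "i < k")
      case True
      hence k1: "2 \<le> Suc k" by simp
      have w': "s (Suc k) h \<in> V" using Esrc[OF k1 h(1)] .
      note IH = Suc.IH[OF w', of i]
      have A: "dnmin (Suc k) w i = dnmin k (s (Suc k) h) i" using False by (simp add: h_def)
      have B: "Suc i < Suc k \<longrightarrow> r (Suc i) (dnmin (Suc k) w i) = s (Suc (Suc i)) (dnmin (Suc k) w (Suc i))"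
      proof (cases "Suc i = k")
        case True
        then show ?thesis using IH A h_def by simp
      next
        case False
        then have "Suc i < k" using True by simp
        moreover have "dnmin (Suc k) w (Suc i) = dnmin k (s (Suc k) h) (Suc i)"
          using \<open>Suc i < k\<close> by (simp add: h_def)
        ultimately show ?thesis using IH A by simp
      qed
      show ?thesis using IH A B True by simp
    next
      case False
      then show ?thesis using \<open>i \<noteq> k\<close> by simp
    qed
  qed
qed

lemma dnmax_props:
  "w \<in> V \<Longrightarrow> (i < k \<longrightarrow> dnmax k w i \<in> E (Suc i) \<and> ismax (Suc i) (dnmax k w i))
     \<and> (k = Suc i \<longrightarrow> r k (dnmax k w i) = w)
     \<and> (Suc i < k \<longrightarrow> r (Suc i) (dnmax k w i) = s (Suc (Suc i)) (dnmax k w (Suc i)))"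
proof (induction k arbitrary: w i)
  case 0 then show ?case by simp
next
  case (Suc k)
  define h where "h = last (L (Suc k) w)"
  have h: "h \<in> E (Suc k)" "r (Suc k) h = w" using lastL[of "Suc k" w] Suc.prems by (auto simp: h_def)
  have hmax: "ismax (Suc k) h" using h by (simp add: ismax_def h_def)
  show ?case
  proof (cases "i = k")
    case True then show ?thesis using h hmax by (simp add: h_def[symmetric])
  next
    case False
    show ?thesis
    proof (cases "i < k")
      case True
      hence k1: "2 \<le> Suc k" by simp
      have w': "s (Suc k) h \<in> V" using Esrc[OF k1 h(1)] .
      note IH = Suc.IH[OF w', of i]
      have A: "dnmax (Suc k) w i = dnmax k (s (Suc k) h) i" using False by (simp add: h_def)
      have B: "Suc i < Suc k \<longrightarrow> r (Suc i) (dnmax (Suc k) w i) = s (Suc (Suc i)) (dnmax (Suc k) w (Suc i))"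
      proof (cases "Suc i = k")
        case True
        then show ?thesis using IH A h_def by simp
      next
        case False
        then have "Suc i < k" using True by simp
        moreover have "dnmax (Suc k) w (Suc i) = dnmax k (s (Suc k) h) (Suc i)"
          using \<open>Suc i < k\<close> by (simp add: h_def)
        ultimately show ?thesis using IH A by simp
      qed
      show ?thesis using IH A B True by simp
    next
      case False
      then show ?thesis using \<open>i \<noteq> k\<close> by simp
    qed
  qed
qed

lemma dnmin_Vb: "b \<in> Vb \<Longrightarrow> i < k \<Longrightarrow> dnmin k b i = m b i"
proof (induction k arbitrary: i)
  case 0 then show ?case by simp
next
  case (Suc k)
  have hd: "hd (L (Suc k) b) = m b k"
  proof (cases k)
    case 0 then show ?thesis using L1b[OF Suc.prems(1)] by simp
  next
    case (Suc k') then show ?thesis using L2b[of "Suc k" b] ebm[of "Suc k" b] Suc.prems VbV by auto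
  qed
  show ?case
  proof (cases "i = k")
    case True then show ?thesis using hd by simp
  next
    case False
    hence ik: "i < k" using Suc.prems by simp
    hence "s (Suc k) (m b k) = b" using ms[OF Suc.prems(1), of k] by simp
    then show ?thesis using Suc.IH[OF Suc.prems(1) ik] hd False by simp
  qed
qed

lemma dnmax_Vt: "b \<in> Vt \<Longrightarrow> i < k \<Longrightarrow> dnmax k b i = M b i"
proof (induction k arbitrary: i)
  case 0 then show ?case by simp
next
  case (Suc k)
  have hd: "last (L (Suc k) b) = M b k"
  proof (cases k)
    case 0 then show ?thesis using L1t[OF Suc.prems(1)] by simp
  next
    case (Suc k') then show ?thesis using L2t[of "Suc k" b] etM[of "Suc k" b] Suc.prems VtV by auto
  qed
  show ?case
  proof (cases "i = k")
    case True then show ?thesis using hd by simp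
  next
    case False
    hence ik: "i < k" using Suc.prems by simp
    hence "s (Suc k) (M b k) = b" using Ms[OF Suc.prems(1), of k] by simp
    then show ?thesis using Suc.IH[OF Suc.prems(1) ik] hd False by simp
  qed
qed

lemma dnmin_m: "w \<in> V \<Longrightarrow> Suc i < k \<Longrightarrow> dnmin k w i = m (vb w) i"
proof -
  assume w: "w \<in> V" and ik: "Suc i < k"
  then obtain k' where k': "k = Suc k'" by (cases k) auto
  have k2: "2 \<le> Suc k'" using ik k' by simp
  have "hd (L (Suc k') w) = eb (Suc k') w" using L2b[OF k2 w] .
  hence "s (Suc k') (hd (L (Suc k') w)) = vb w" using eb_in[OF k2 w] by simp
  moreover have "i \<noteq> k'" "i < k'" using ik k' by auto
  ultimately show ?thesis using dnmin_Vb[OF vbV[OF w], of i k'] k' by simp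
qed

lemma dnmax_M: "w \<in> V \<Longrightarrow> Suc i < k \<Longrightarrow> dnmax k w i = M (vt w) i"
proof -
  assume w: "w \<in> V" and ik: "Suc i < k"
  then obtain k' where k': "k = Suc k'" by (cases k) auto
  have k2: "2 \<le> Suc k'" using ik k' by simp
  have "last (L (Suc k') w) = et (Suc k') w" using L2t[OF k2 w] .
  hence "s (Suc k') (last (L (Suc k') w)) = vt w" using et_in[OF k2 w] by simp
  moreover have "i \<noteq> k'" "i < k'" using ik k' by auto
  ultimately show ?thesis using dnmax_Vt[OF vtV[OF w], of i k'] k' by simp
qed

lemma min_dnmin:
  assumes x: "x \<in> path_space E s r"
  shows "(\<forall>i<k. ismin (Suc i) (x i)) \<Longrightarrow> i < k \<Longrightarrow> x i = dnmin k (s (Suc k) (x k)) i"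
proof (induction k arbitrary: i)
  case 0 then show ?case by simp
next
  case (Suc k)
  have xk: "x k = hd (L (Suc k) (r (Suc k) (x k)))" using Suc.prems by (simp add: ismin_def)
  have rk: "r (Suc k) (x k) = s (Suc (Suc k)) (x (Suc k))" using psD[OF x] by blast
  show ?case
  proof (cases "i = k")
    case True then show ?thesis using xk rk by simp
  next
    case False
    hence "i < k" using Suc.prems by simp
    hence "x i = dnmin k (s (Suc k) (x k)) i" using Suc.IH Suc.prems by simp
    then show ?thesis using False xk rk by (metis dnmin.simps(2))
  qed
qed

lemma max_dnmax:
  assumes x: "x \<in> path_space E s r"
  shows "(\<forall>i<k. ismax (Suc i) (x i)) \<Longrightarrow> i < k \<Longrightarrow> x i = dnmax k (s (Suc k) (x k)) i"
proof (induction k arbitrary: i)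
  case 0 then show ?case by simp
next
  case (Suc k)
  have xk: "x k = last (L (Suc k) (r (Suc k) (x k)))" using Suc.prems by (simp add: ismax_def)
  have rk: "r (Suc k) (x k) = s (Suc (Suc k)) (x (Suc k))" using psD[OF x] by blast
  show ?case
  proof (cases "i = k")
    case True then show ?thesis using xk rk by simp
  next
    case False
    hence "i < k" using Suc.prems by simp
    hence "x i = dnmax k (s (Suc k) (x k)) i" using Suc.IH Suc.prems by simp
    then show ?thesis using False xk rk by (metis dnmax.simps(2))
  qed
qed

definition succ :: "nat \<Rightarrow> 'e \<Rightarrow> 'e" where
  "succ n e = (THE e'. consec (L n (r n e)) e e')"
definition pred :: "nat \<Rightarrow> 'e \<Rightarrow> 'e" where
  "pred n e = (THE e'. consec (L n (r n e)) e' e)"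

lemma succ_props:
  assumes n: "1 \<le> n" and e: "e \<in> E n" and nm: "\<not> ismax n e"
  shows "consec (L n (r n e)) e (succ n e)" "succ n e \<in> E n" "r n (succ n e) = r n e"
    "\<not> ismin n (succ n e)" "pred n (succ n e) = e"
proof -
  define u where "u = r n e"
  have u: "u \<in> V" using Erng[OF n e] by (simp add: u_def)
  have d: "distinct (L n u)" using Ldist[OF n u] .
  have em: "e \<in> set (L n u)" using Lmem[OF n u] e u_def by blast
  have el: "e \<noteq> last (L n u)" using nm e unfolding ismax_def u_def by blast
  obtain b where b: "consec (L n u) e b" using consec_ex_succ[OF em el] by blast
  have sb: "succ n e = b" unfolding succ_def u_def[symmetric]
    by (rule the_equality[where P="\<lambda>x. consec (L n u) e x", OF b]) (rule consec_uniq1[OF d b, symmetric])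
  show "consec (L n (r n e)) e (succ n e)" using b sb u_def by simp
  have bm: "b \<in> set (L n u)" using consec_mem[OF b] by blast
  have bE: "b \<in> E n" and rb: "r n b = u" using Lmem[OF n u] bm by auto
  show "succ n e \<in> E n" "r n (succ n e) = r n e" using bE rb sb u_def by auto
  have "b \<noteq> hd (L n u)" by (rule consec_not_hd[OF d b])
  then show "\<not> ismin n (succ n e)" unfolding ismin_def sb rb by blast
  show "pred n (succ n e) = e" unfolding pred_def sb rb
    by (rule the_equality[where P="\<lambda>x. consec (L n u) x b", OF b]) (rule consec_uniq2[OF d b, symmetric])
qed

lemma pred_props:
  assumes n: "1 \<le> n" and e: "e \<in> E n" and nm: "\<not> ismin n e"
  shows "consec (L n (r n e)) (pred n e) e" "pred n e \<in> E n" "r n (pred n e) = r n e"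
    "\<not> ismax n (pred n e)" "succ n (pred n e) = e"
proof -
  define u where "u = r n e"
  have u: "u \<in> V" using Erng[OF n e] by (simp add: u_def)
  have d: "distinct (L n u)" using Ldist[OF n u] .
  have em: "e \<in> set (L n u)" using Lmem[OF n u] e u_def by blast
  have el: "e \<noteq> hd (L n u)" using nm e unfolding ismin_def u_def by blast
  obtain b where b: "consec (L n u) b e" using consec_ex_pred[OF em el] by blast
  have sb: "pred n e = b" unfolding pred_def u_def[symmetric]
    by (rule the_equality[where P="\<lambda>x. consec (L n u) x e", OF b]) (rule consec_uniq2[OF d b, symmetric])
  show "consec (L n (r n e)) (pred n e) e" using b sb u_def by simp
  have bm: "b \<in> set (L n u)" using consec_mem[OF b] by blast
  have bE: "b \<in> E n" and rb: "r n b = u" using Lmem[OF n u] bm by auto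
  show "pred n e \<in> E n" "r n (pred n e) = r n e" using bE rb sb u_def by auto
  have "b \<noteq> last (L n u)" by (rule consec_not_last[OF d b])
  then show "\<not> ismax n (pred n e)" unfolding ismax_def sb rb by blast
  show "succ n (pred n e) = e" unfolding succ_def sb rb
    by (rule the_equality[where P="\<lambda>x. consec (L n u) b x", OF b]) (rule consec_uniq1[OF d b, symmetric])
qed

end

context vsetup begin

definition fnm :: "(nat \<Rightarrow> 'e) \<Rightarrow> nat" where
  "fnm x = (LEAST i. \<not> ismax (Suc i) (x i))"

definition phi :: "(nat \<Rightarrow> 'e) \<Rightarrow> nat \<Rightarrow> 'e" where
  "phi x = (if (\<forall>i. ismax (Suc i) (x i)) then m (\<sigma> (r 1 (x 0)))
     else (\<lambda>i. if fnm x < i then x i else if i = fnm x then succ (Suc (fnm x)) (x (fnm x))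
         else dnmin (fnm x) (s (Suc (fnm x)) (succ (Suc (fnm x)) (x (fnm x)))) i))"

lemma fnm: "\<not> (\<forall>i. ismax (Suc i) (x i)) \<Longrightarrow> \<not> ismax (Suc (fnm x)) (x (fnm x)) \<and> (\<forall>i<fnm x. ismax (Suc i) (x i))"
proof -
  assume "\<not> (\<forall>i. ismax (Suc i) (x i))"
  then have ex: "\<exists>i. \<not> ismax (Suc i) (x i)" by blast
  show ?thesis unfolding fnm_def using LeastI_ex[OF ex] not_less_Least by blast
qed

lemma fnm_eq: "\<not> ismax (Suc k) (x k) \<Longrightarrow> \<forall>i<k. ismax (Suc i) (x i) \<Longrightarrow> fnm x = k"
  unfolding fnm_def by (rule Least_equality) (auto simp: not_less[symmetric])

lemma phi_nonmax:
  assumes x: "x \<in> path_space E s r" and nm: "\<not> (\<forall>i. ismax (Suc i) (x i))"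
  defines "k \<equiv> fnm x"
  shows "phi x k = succ (Suc k) (x k)" "\<And>i. k < i \<Longrightarrow> phi x i = x i"
    "\<And>i. i < k \<Longrightarrow> phi x i = dnmin k (s (Suc k) (succ (Suc k) (x k))) i"
    "phi x \<in> path_space E s r" "\<And>i. i < k \<Longrightarrow> ismin (Suc i) (phi x i)" "\<not> ismin (Suc k) (phi x k)"
proof -
  have P: "phi x = (\<lambda>i. if k < i then x i else if i = k then succ (Suc k) (x k)
         else dnmin k (s (Suc k) (succ (Suc k) (x k))) i)"
    unfolding phi_def k_def by (rule if_not_P[OF nm])
  show pk: "phi x k = succ (Suc k) (x k)" using P by simp
  show pg: "\<And>i. k < i \<Longrightarrow> phi x i = x i" using P by simp
  show pl: "\<And>i. i < k \<Longrightarrow> phi x i = dnmin k (s (Suc k) (succ (Suc k) (x k))) i" using P by simp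
  have xk: "x k \<in> E (Suc k)" "\<not> ismax (Suc k) (x k)" using psD[OF x] fnm[OF nm] k_def by auto
  note S = succ_props[of "Suc k", OF _ xk]
  define e' where "e' = succ (Suc k) (x k)"
  define w' where "w' = s (Suc k) e'"
  have w'V: "k \<ge> 1 \<Longrightarrow> w' \<in> V" unfolding w'_def using S(2) Esrc[of "Suc k" e'] by (simp add: e'_def)
  show "\<And>i. i < k \<Longrightarrow> ismin (Suc i) (phi x i)"
    using pl dnmin_props[OF w'V] by (simp add: w'_def e'_def)
  show "\<not> ismin (Suc k) (phi x k)" using pk S(4) by simp
  show "phi x \<in> path_space E s r" unfolding path_space_def
  proof (intro CollectI allI conjI)
    fix i
    consider "k < i" | "i = k" | "i < k" by linarith
    then show "phi x i \<in> E (Suc i)"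
    proof cases
      case 1 then show ?thesis using pg psD[OF x] by simp
    next
      case 2 then show ?thesis using pk S(2) by simp
    next
      case 3 then show ?thesis using pl dnmin_props[OF w'V] by (simp add: w'_def e'_def)
    qed
    consider "k < i" | "i = k" | "Suc i = k" | "Suc i < k" by linarith
    then show "r (Suc i) (phi x i) = s (Suc (Suc i)) (phi x (Suc i))"
    proof cases
      case 1 then show ?thesis using pg psD[OF x] by simp
    next
      case 2 then show ?thesis using pk pg S(3) psD[OF x, of k] by simp
    next
      case 3
      have "r k (dnmin k w' i) = w'" using dnmin_props[OF w'V, of i k] 3 by simp
      then show ?thesis using 3 pl pk by (simp add: w'_def e'_def)
    next
      case 4
      then show ?thesis using pl dnmin_props[OF w'V, of i k] by (simp add: w'_def e'_def)
    qed
  qed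
qed

lemma phi_M: "t \<in> Vt \<Longrightarrow> phi (M t) = m (\<sigma> t)"
  using Mmax Mr[of t 0] unfolding phi_def by simp

lemma sigmaVb: "t \<in> Vt \<Longrightarrow> \<sigma> t \<in> Vb"
  using sigma by (auto simp: bij_betw_def)

lemma phi_ps: "x \<in> path_space E s r \<Longrightarrow> phi x \<in> path_space E s r"
proof (cases "\<forall>i. ismax (Suc i) (x i)")
  case True
  assume x: "x \<in> path_space E s r"
  then have "x \<in> M ` Vt" using maxpaths_char True by blast
  then obtain t where t: "t \<in> Vt" "x = M t" by blast
  then show ?thesis using phi_M mps sigmaVb by simp
next
  case False
  assume x: "x \<in> path_space E s r"
  then show ?thesis using phi_nonmax(4)[OF x False] by simp
qed

lemma phi_cont:
  assumes x: "x \<in> path_space E s r"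
  shows "\<exists>n. \<forall>y\<in>path_space E s r. (\<forall>j<n. y j = x j) \<longrightarrow> phi y i = phi x i"
proof (cases "\<forall>i. ismax (Suc i) (x i)")
  case True
  then have "x \<in> M ` Vt" using maxpaths_char x by blast
  then obtain t where t: "t \<in> Vt" "x = M t" by blast
  show ?thesis
  proof (intro exI ballI impI)
    fix y assume y: "y \<in> path_space E s r" and ag: "\<forall>j<i + 2 + K. y j = x j"
    show "phi y i = phi x i"
    proof (cases "\<forall>i. ismax (Suc i) (y i)")
      case True
      then show ?thesis using ag True \<open>\<forall>i. ismax (Suc i) (x i)\<close> unfolding phi_def by simp
    next
      case False
      define k where "k = fnm y"
      have yk: "y k \<in> E (Suc k)" "\<not> ismax (Suc k) (y k)" using psD[OF y] fnm[OF False] k_def by auto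
      have below: "\<forall>j<k. ismax (Suc j) (y j)" using fnm[OF False] k_def by simp
      have kn: "i + 2 + K \<le> k"
      proof (rule ccontr)
        assume "\<not> i + 2 + K \<le> k"
        then have "y k = M t k" using ag t by simp
        then show False using yk Mmax[OF t(1)] by simp
      qed
      note S = succ_props[of "Suc k", OF _ yk]
      define e' where "e' = succ (Suc k) (y k)"
      define w' where "w' = s (Suc k) e'"
      have w'V: "w' \<in> V" unfolding w'_def using S(2) Esrc[of "Suc k" e'] kn K2 by (simp add: e'_def)
      have "phi y i = dnmin k w' i" using phi_nonmax(3)[OF y False] kn by (simp add: k_def w'_def e'_def)
      also have "\<dots> = m (vb w') i" using dnmin_m[OF w'V] kn by simp
      finally have py: "phi y i = m (vb w') i" .
      obtain k' where k': "k = Suc k'" using kn by (cases k) auto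
      have mb: "r (Suc 0) (y 0) = vt (r k (y (k - 1))) \<and> y 0 = M (vt (r k (y (k - 1)))) 0"
        by (rule maxbelow[OF y below]) (use kn in simp)
      have "y 0 = M t 0" using ag t kn by simp
      hence "r (Suc 0) (y 0) = t" using Mr[OF t(1)] by simp
      hence vtt: "vt (r k (y (k - 1))) = t" using mb by metis
      have "r k (y (k - 1)) = s (Suc k) (y k)" using psD[OF y, of k'] k' by simp
      hence vtt': "vt (s (Suc k) (y k)) = t" using vtt by simp
      have uV: "r (Suc k) (y k) \<in> V" using Erng yk(1) by simp
      have "\<sigma> (vt (s (Suc k) (y k))) = vb (s (Suc k) e')"
        using consec_succ[OF good[of "Suc k", OF _ uV] S(1)] kn by (simp add: e'_def)
      hence "vb w' = \<sigma> t" using vtt' by (simp add: w'_def)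
      thus ?thesis using py t phi_M by simp
    qed
  qed
next
  case False
  define k where "k = fnm x"
  show ?thesis
  proof (intro exI ballI impI)
    fix y assume y: "y \<in> path_space E s r" and ag: "\<forall>j<Suc (max k i). y j = x j"
    have xk: "\<not> ismax (Suc k) (x k)" "\<forall>j<k. ismax (Suc j) (x j)" using fnm[OF False] k_def by auto
    have yk: "\<not> ismax (Suc k) (y k)" "\<forall>j<k. ismax (Suc j) (y j)" using xk ag by auto
    have nmy: "\<not> (\<forall>i. ismax (Suc i) (y i))" using yk by blast
    have fy: "fnm y = k" using fnm_eq[OF yk] .
    have yeq: "y k = x k" using ag by simp
    have "i < Suc (max k i)" by simp
    hence yi: "y i = x i" using ag by blast
    have Py: "phi y = (\<lambda>i. if fnm y < i then y i else if i = fnm y then succ (Suc (fnm y)) (y (fnm y))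
         else dnmin (fnm y) (s (Suc (fnm y)) (succ (Suc (fnm y)) (y (fnm y)))) i)"
      unfolding phi_def by (rule if_not_P[OF nmy])
    have Px: "phi x = (\<lambda>i. if fnm x < i then x i else if i = fnm x then succ (Suc (fnm x)) (x (fnm x))
         else dnmin (fnm x) (s (Suc (fnm x)) (succ (Suc (fnm x)) (x (fnm x)))) i)"
      unfolding phi_def by (rule if_not_P[OF False])
    show "phi y i = phi x i" unfolding Py Px fy k_def[symmetric] using yeq yi by simp
  qed
qed

end

context vsetup begin

lemma good_dual: "K \<le> n \<Longrightarrow> u \<in> V \<Longrightarrow>
   successively (\<lambda>e e'. inv_into Vt \<sigma> (vb (s n e)) = vt (s n e')) (rev (L n u))"
proof -
  assume n: "K \<le> n" and u: "u \<in> V"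
  have n1: "1 \<le> n" "2 \<le> n" using n K2 by auto
  have g: "successively (\<lambda>e e'. \<sigma> (vt (s n e)) = vb (s n e')) (L n u)" using good[OF n u] .
  have inj: "inj_on \<sigma> Vt" using sigma by (simp add: bij_betw_def)
  have "successively (\<lambda>x y. inv_into Vt \<sigma> (vb (s n y)) = vt (s n x)) (L n u)"
  proof (rule successively_mono[OF g])
    fix x y assume xm: "x \<in> set (L n u)" and "y \<in> set (L n u)" and eq: "\<sigma> (vt (s n x)) = vb (s n y)"
    have "x \<in> E n" using Lmem[OF n1(1) u] xm by blast
    hence "vt (s n x) \<in> Vt" using vtV Esrc[OF n1(2)] by blast
    thus "inv_into Vt \<sigma> (vb (s n y)) = vt (s n x)" using eq[symmetric] inv_into_f_f[OF inj] by simp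
  qed
  thus ?thesis by simp
qed

lemma skel_dual: "skeleton V E s r Vb Vt m M vb vt eb et"
  using skel unfolding skeleton_def by (simp add: Int_commute) (metis)

lemma dual: "vsetup V E s r Vb Vt m M vb vt eb et (inv_into Vt \<sigma>) (\<lambda>n u. rev (L n u)) K"
proof (unfold_locales)
  show "skeleton V E s r Vb Vt m M vb vt eb et" by (rule skel_dual)
  show "bij_betw (inv_into Vt \<sigma>) Vb Vt" using sigma by (rule bij_betw_inv_into)
qed (use Erng Esrc Ldist Lset Lne L1t L1b L2t L2b good_dual K2 in \<open>simp_all add: last_rev hd_rev\<close>)

abbreviation "L' \<equiv> (\<lambda>n u. rev (L n u))"
abbreviation "psi \<equiv> vsetup.phi E s r M (inv_into Vt \<sigma>) L'"

lemma D_ismax: "vsetup.ismax E r L' n e = ismin n e"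
  by (simp add: vsetup.ismax_def[OF dual] ismin_def last_rev)
lemma D_ismin: "vsetup.ismin E r L' n e = ismax n e"
  by (simp add: vsetup.ismin_def[OF dual] ismax_def hd_rev)
lemma D_succ: "vsetup.succ r L' n e = pred n e"
  by (simp add: vsetup.succ_def[OF dual] pred_def consec_rev)
lemma D_dnmin: "vsetup.dnmin s L' k w i = dnmax k w i"
  by (induction k arbitrary: w) (simp_all add: vsetup.dnmin.simps[OF dual] hd_rev)

lemma minpaths_char: "{x \<in> path_space E s r. \<forall>i. ismin (Suc i) (x i)} = m ` Vb"
  using vsetup.maxpaths_char[OF dual] by (simp add: D_ismax)

lemma psi_m: "b \<in> Vb \<Longrightarrow> psi (m b) = M (inv_into Vt \<sigma> b)"
  by (rule vsetup.phi_M[OF dual])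

lemma psi_ps: "x \<in> path_space E s r \<Longrightarrow> psi x \<in> path_space E s r"
  by (rule vsetup.phi_ps[OF dual])

lemma psi_cont: "x \<in> path_space E s r \<Longrightarrow> \<exists>n. \<forall>y\<in>path_space E s r. (\<forall>j<n. y j = x j) \<longrightarrow> psi y i = psi x i"
  by (rule vsetup.phi_cont[OF dual])

lemma D_fnm_eq: "\<not> ismin (Suc k) (x k) \<Longrightarrow> \<forall>i<k. ismin (Suc i) (x i) \<Longrightarrow> vsetup.fnm E r L' x = k"
  using vsetup.fnm_eq[OF dual, of k x] by (simp add: D_ismax)

lemma D_fnm: "\<not> (\<forall>i. ismin (Suc i) (x i)) \<Longrightarrow>
   \<not> ismin (Suc (vsetup.fnm E r L' x)) (x (vsetup.fnm E r L' x)) \<and> (\<forall>i<vsetup.fnm E r L' x. ismin (Suc i) (x i))"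
  using vsetup.fnm[OF dual, of x] by (simp add: D_ismax)

lemma psi_nonmin:
  assumes x: "x \<in> path_space E s r" and nm: "\<not> (\<forall>i. ismin (Suc i) (x i))"
  defines "k \<equiv> vsetup.fnm E r L' x"
  shows "psi x k = pred (Suc k) (x k)" "\<And>i. k < i \<Longrightarrow> psi x i = x i"
    "\<And>i. i < k \<Longrightarrow> psi x i = dnmax k (s (Suc k) (pred (Suc k) (x k))) i"
    "\<And>i. i < k \<Longrightarrow> ismax (Suc i) (psi x i)" "\<not> ismax (Suc k) (psi x k)"
proof -
  have nm': "\<not> (\<forall>i. vsetup.ismax E r L' (Suc i) (x i))" using nm by (simp add: D_ismax)
  note P = vsetup.phi_nonmax[OF dual x nm']
  show "psi x k = pred (Suc k) (x k)" using P(1) by (simp add: k_def D_succ)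
  show "\<And>i. k < i \<Longrightarrow> psi x i = x i" using P(2) by (simp add: k_def)
  show "\<And>i. i < k \<Longrightarrow> psi x i = dnmax k (s (Suc k) (pred (Suc k) (x k))) i"
    using P(3) by (simp add: k_def D_succ D_dnmin)
  show "\<And>i. i < k \<Longrightarrow> ismax (Suc i) (psi x i)" using P(5) by (simp add: k_def D_ismin)
  show "\<not> ismax (Suc k) (psi x k)" using P(6) by (simp add: k_def D_ismin)
qed

lemma inv_sigma: "t \<in> Vt \<Longrightarrow> inv_into Vt \<sigma> (\<sigma> t) = t"
  using sigma by (simp add: bij_betw_def inv_into_f_f)
lemma sigma_inv: "b \<in> Vb \<Longrightarrow> \<sigma> (inv_into Vt \<sigma> b) = b"
  using sigma by (simp add: bij_betw_def f_inv_into_f)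
lemma inv_sigmaVt: "b \<in> Vb \<Longrightarrow> inv_into Vt \<sigma> b \<in> Vt"
  using sigma by (metis bij_betw_def inv_into_into)

lemma psi_phi: "x \<in> path_space E s r \<Longrightarrow> psi (phi x) = x"
proof (cases "\<forall>i. ismax (Suc i) (x i)")
  case True
  assume x: "x \<in> path_space E s r"
  then have "x \<in> M ` Vt" using maxpaths_char True by blast
  then obtain t where t: "t \<in> Vt" "x = M t" by blast
  then show ?thesis using phi_M psi_m sigmaVb inv_sigma by simp
next
  case False
  assume x: "x \<in> path_space E s r"
  define k where "k = fnm x"
  define y where "y = phi x"
  note P = phi_nonmax[OF x False]
  have y: "y \<in> path_space E s r" using P(4) y_def by simp
  have ymin: "\<forall>i<k. ismin (Suc i) (y i)" "\<not> ismin (Suc k) (y k)" using P(5,6) by (auto simp: y_def k_def)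
  have nmy: "\<not> (\<forall>i. ismin (Suc i) (y i))" using ymin by blast
  have fy: "vsetup.fnm E r L' y = k" using D_fnm_eq[OF ymin(2,1)] .
  note Q = psi_nonmin[OF y nmy]
  have xk: "x k \<in> E (Suc k)" "\<not> ismax (Suc k) (x k)" using psD[OF x] fnm[OF False] k_def by auto
  have yk: "y k = succ (Suc k) (x k)" using P(1) by (simp add: y_def k_def)
  have pk: "pred (Suc k) (y k) = x k" using succ_props(5)[of "Suc k", OF _ xk] yk by simp
  have below: "\<forall>i<k. ismax (Suc i) (x i)" using fnm[OF False] k_def by simp
  show "psi (phi x) = x"
  proof
    fix i
    consider "k < i" | "i = k" | "i < k" by linarith
    then show "psi (phi x) i = x i"
    proof cases
      case 1 then show ?thesis using Q(2) P(2) fy by (simp add: y_def k_def)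
    next
      case 2 then show ?thesis using Q(1) fy pk by (simp add: y_def)
    next
      case 3
      have "psi y i = dnmax k (s (Suc k) (x k)) i" using Q(3)[of i] fy pk 3 by simp
      also have "\<dots> = x i" using max_dnmax[OF x below 3] by simp
      finally show ?thesis by (simp add: y_def)
    qed
  qed
qed

lemma phi_psi: "y \<in> path_space E s r \<Longrightarrow> phi (psi y) = y"
proof (cases "\<forall>i. ismin (Suc i) (y i)")
  case True
  assume y: "y \<in> path_space E s r"
  then have "y \<in> m ` Vb" using minpaths_char True by blast
  then obtain b where b: "b \<in> Vb" "y = m b" by blast
  then show ?thesis using phi_M psi_m inv_sigmaVt sigma_inv by simp
next
  case False
  assume y: "y \<in> path_space E s r"
  define k where "k = vsetup.fnm E r L' y"
  define x where "x = psi y"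
  note Q = psi_nonmin[OF y False]
  have x: "x \<in> path_space E s r" using psi_ps[OF y] x_def by simp
  have xmax: "\<forall>i<k. ismax (Suc i) (x i)" "\<not> ismax (Suc k) (x k)" using Q(4,5) by (auto simp: x_def k_def)
  have nmx: "\<not> (\<forall>i. ismax (Suc i) (x i))" using xmax by blast
  have fx: "fnm x = k" using fnm_eq[OF xmax(2,1)] .
  note P = phi_nonmax[OF x nmx]
  have yk: "y k \<in> E (Suc k)" "\<not> ismin (Suc k) (y k)" using psD[OF y] D_fnm[OF False] k_def by auto
  have xk: "x k = pred (Suc k) (y k)" using Q(1) by (simp add: x_def k_def)
  have sk: "succ (Suc k) (x k) = y k" using pred_props(5)[of "Suc k", OF _ yk] xk by simp
  have below: "\<forall>i<k. ismin (Suc i) (y i)" using D_fnm[OF False] k_def by simp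
  show "phi (psi y) = y"
  proof
    fix i
    consider "k < i" | "i = k" | "i < k" by linarith
    then show "phi (psi y) i = y i"
    proof cases
      case 1 then show ?thesis using Q(2) P(2) fx by (simp add: x_def k_def)
    next
      case 2 then show ?thesis using P(1) fx sk by (simp add: x_def)
    next
      case 3
      have "phi x i = dnmin k (s (Suc k) (y k)) i" using P(3)[of i] fx sk 3 by simp
      also have "\<dots> = y i" using min_dnmin[OF y below 3] by simp
      finally show ?thesis by (simp add: x_def)
    qed
  qed
qed

end

definition idx :: "'a list \<Rightarrow> 'a \<Rightarrow> nat" where
  "idx xs a = (LEAST i. i < length xs \<and> xs ! i = a)"

lemma idx: "a \<in> set xs \<Longrightarrow> idx xs a < length xs \<and> xs ! idx xs a = a"
proof -
  assume "a \<in> set xs"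
  then have ex: "\<exists>i. i < length xs \<and> xs ! i = a" by (simp add: in_set_conv_nth)
  show ?thesis unfolding idx_def using LeastI_ex[OF ex] .
qed

lemma idx_nth: "distinct xs \<Longrightarrow> i < length xs \<Longrightarrow> idx xs (xs ! i) = i"
  unfolding idx_def
  by (rule Least_equality) (auto simp: nth_eq_iff_index_eq)

lemma idx_inj: "distinct xs \<Longrightarrow> a \<in> set xs \<Longrightarrow> b \<in> set xs \<Longrightarrow> idx xs a = idx xs b \<Longrightarrow> a = b"
  by (metis idx)

lemma linear_idx:
  assumes d: "distinct xs"
  shows "linear_order_on (set xs) {(a, b). a \<in> set xs \<and> b \<in> set xs \<and> idx xs a \<le> idx xs b}"
  unfolding linear_order_on_def partial_order_on_def preorder_on_def refl_on_def trans_def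
    antisym_def total_on_def
  using idx_inj[OF d] by (auto intro: order_trans le_antisym)

context vsetup begin

definition om :: "nat \<Rightarrow> 'e rel" where
  "om n = {(a, b). \<exists>u\<in>V. a \<in> set (L n u) \<and> b \<in> set (L n u) \<and> idx (L n u) a \<le> idx (L n u) b}"

lemma om_iff: "1 \<le> n \<Longrightarrow> (a, b) \<in> om n \<longleftrightarrow>
   a \<in> E n \<and> b \<in> E n \<and> r n a = r n b \<and> idx (L n (r n a)) a \<le> idx (L n (r n a)) b"
proof
  assume n: "1 \<le> n" and "(a, b) \<in> om n"
  then obtain u where u: "u \<in> V" "a \<in> set (L n u)" "b \<in> set (L n u)" "idx (L n u) a \<le> idx (L n u) b"
    by (auto simp: om_def)
  then show "a \<in> E n \<and> b \<in> E n \<and> r n a = r n b \<and> idx (L n (r n a)) a \<le> idx (L n (r n a)) b"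
    using Lmem[OF n u(1)] by auto
next
  assume n: "1 \<le> n" and h: "a \<in> E n \<and> b \<in> E n \<and> r n a = r n b \<and> idx (L n (r n a)) a \<le> idx (L n (r n a)) b"
  have u: "r n a \<in> V" using Erng n h by blast
  have "a \<in> set (L n (r n a))" "b \<in> set (L n (r n a))" using Lmem[OF n u] h by auto
  then show "(a, b) \<in> om n" unfolding om_def using h u by blast
qed

lemma is_ord: "is_ordering V E r om"
  unfolding is_ordering_def
proof (intro allI impI conjI ballI)
  fix n :: nat assume n: "1 \<le> n"
  show "om n \<subseteq> {(e, e'). e \<in> E n \<and> e' \<in> E n \<and> r n e = r n e'}" using om_iff[OF n] by auto
  fix v assume v: "v \<in> V"
  have eq: "om n \<inter> rinv E r n v \<times> rinv E r n v =
     {(a, b). a \<in> set (L n v) \<and> b \<in> set (L n v) \<and> idx (L n v) a \<le> idx (L n v) b}"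
    using Lset[OF n v] om_iff[OF n] by (auto simp: rinv_def)
  show "linear_order_on (rinv E r n v) (om n \<inter> rinv E r n v \<times> rinv E r n v)"
    unfolding eq using linear_idx[OF Ldist[OF n v]] Lset[OF n v] by simp
qed

lemma max_edge_iff: "1 \<le> n \<Longrightarrow> max_edge E r om n e \<longleftrightarrow> ismax n e"
proof
  assume n: "1 \<le> n" and me: "max_edge E r om n e"
  have e: "e \<in> E n" using me by (simp add: max_edge_def)
  define u where "u = r n e"
  have u: "u \<in> V" using Erng n e by (simp add: u_def)
  define xs where "xs = L n u"
  have ne: "xs \<noteq> []" and d: "distinct xs" using Lne[OF n u] Ldist[OF n u] by (auto simp: xs_def)
  have lm: "last xs \<in> E n" "r n (last xs) = u" using lastL[OF n u] by (auto simp: xs_def)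
  have "(last xs, e) \<in> om n" using me lm by (simp add: max_edge_def u_def)
  hence "idx (L n (r n (last xs))) (last xs) \<le> idx (L n (r n (last xs))) e" using om_iff[OF n] by blast
  hence "idx xs (last xs) \<le> idx xs e" using lm(2) unfolding xs_def by metis
  moreover have "idx xs (last xs) = length xs - 1" using idx_nth[OF d, of "length xs - 1"] ne
    by (simp add: last_conv_nth)
  moreover have em: "e \<in> set xs" using Lmem[OF n u] e by (simp add: xs_def u_def)
  ultimately have "idx xs e = length xs - 1" using idx[OF em] by linarith
  hence "e = last xs" using idx[OF em] ne by (simp add: last_conv_nth)
  thus "ismax n e" using e by (simp add: ismax_def xs_def u_def)
next
  assume n: "1 \<le> n" and im: "ismax n e"
  have e: "e \<in> E n" and el: "e = last (L n (r n e))" using im by (auto simp: ismax_def)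
  define u where "u = r n e"
  have u: "u \<in> V" using Erng n e by (simp add: u_def)
  define xs where "xs = L n u"
  have ne: "xs \<noteq> []" and d: "distinct xs" using Lne[OF n u] Ldist[OF n u] by (auto simp: xs_def)
  have ie: "idx xs e = length xs - 1" using idx_nth[OF d, of "length xs - 1"] ne el
    by (simp add: last_conv_nth xs_def u_def)
  show "max_edge E r om n e" unfolding max_edge_def
  proof (intro conjI ballI impI)
    show "e \<in> E n" by (rule e)
    fix e' assume e': "e' \<in> E n" "r n e' = r n e"
    have "e' \<in> set xs" using Lmem[OF n u] e' by (simp add: xs_def u_def)
    hence "idx xs e' \<le> idx xs e" using idx ie by fastforce
    thus "(e', e) \<in> om n" using om_iff[OF n] e e' by (simp add: xs_def u_def)
  qed
qed

lemma min_edge_iff: "1 \<le> n \<Longrightarrow> min_edge E r om n e \<longleftrightarrow> ismin n e"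
proof
  assume n: "1 \<le> n" and me: "min_edge E r om n e"
  have e: "e \<in> E n" using me by (simp add: min_edge_def)
  define u where "u = r n e"
  have u: "u \<in> V" using Erng n e by (simp add: u_def)
  define xs where "xs = L n u"
  have ne: "xs \<noteq> []" and d: "distinct xs" using Lne[OF n u] Ldist[OF n u] by (auto simp: xs_def)
  have lm: "hd xs \<in> E n" "r n (hd xs) = u" using hdL[OF n u] by (auto simp: xs_def)
  have "(e, hd xs) \<in> om n" using me lm by (simp add: min_edge_def u_def)
  hence "idx xs e \<le> idx xs (hd xs)" using om_iff[OF n] lm e by (simp add: xs_def u_def)
  moreover have "idx xs (hd xs) = 0" using idx_nth[OF d, of 0] ne by (simp add: hd_conv_nth)
  moreover have em: "e \<in> set xs" using Lmem[OF n u] e by (simp add: xs_def u_def)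
  ultimately have "idx xs e = 0" by linarith
  hence "e = hd xs" using idx[OF em] ne by (simp add: hd_conv_nth)
  thus "ismin n e" using e by (simp add: ismin_def xs_def u_def)
next
  assume n: "1 \<le> n" and im: "ismin n e"
  have e: "e \<in> E n" and el: "e = hd (L n (r n e))" using im by (auto simp: ismin_def)
  define u where "u = r n e"
  have u: "u \<in> V" using Erng n e by (simp add: u_def)
  define xs where "xs = L n u"
  have ne: "xs \<noteq> []" and d: "distinct xs" using Lne[OF n u] Ldist[OF n u] by (auto simp: xs_def)
  have ie: "idx xs e = 0" using idx_nth[OF d, of 0] ne el
    by (simp add: hd_conv_nth xs_def u_def)
  show "min_edge E r om n e" unfolding min_edge_def
  proof (intro conjI ballI impI)
    show "e \<in> E n" by (rule e)
    fix e' assume e': "e' \<in> E n" "r n e' = r n e"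
    have "idx xs e \<le> idx xs e'" using ie by simp
    thus "(e, e') \<in> om n" using om_iff[OF n] e e' by (simp add: xs_def u_def)
  qed
qed

lemma is_succ_iff: "1 \<le> n \<Longrightarrow> e \<in> E n \<Longrightarrow> consec (L n (r n e)) e e' \<Longrightarrow> is_succ om n e e'"
proof -
  assume n: "1 \<le> n" and e: "e \<in> E n" and c: "consec (L n (r n e)) e e'"
  define u where "u = r n e"
  have u: "u \<in> V" using Erng n e by (simp add: u_def)
  define xs where "xs = L n u"
  have d: "distinct xs" using Ldist[OF n u] by (simp add: xs_def)
  obtain i where i: "Suc i < length xs" "xs ! i = e" "xs ! Suc i = e'" using c by (auto simp: consec_def xs_def u_def)
  have ie: "idx xs e = i" "idx xs e' = Suc i" using idx_nth[OF d] i by auto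
  have e'm: "e' \<in> set xs" using i nth_mem by (metis)
  have e'E: "e' \<in> E n" "r n e' = u" using Lmem[OF n u] e'm by (auto simp: xs_def)
  show "is_succ om n e e'" unfolding is_succ_def
  proof (intro conjI allI impI)
    show "(e, e') \<in> om n" using om_iff[OF n] e e'E ie by (simp add: xs_def u_def)
    show "e \<noteq> e'" using consec_neq[OF d] c by (simp add: xs_def u_def)
    fix e'' assume h: "(e, e'') \<in> om n \<and> (e'', e') \<in> om n"
    have e'': "e'' \<in> E n" "r n e'' = u" using h om_iff[OF n] by (auto simp: u_def)
    have "idx xs e \<le> idx xs e''" "idx xs e'' \<le> idx xs e'" using h om_iff[OF n] e'' e'E
      by (auto simp: xs_def u_def)
    hence "idx xs e'' = i \<or> idx xs e'' = Suc i" using ie by linarith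
    moreover have "e'' \<in> set xs" using Lmem[OF n u] e'' by (simp add: xs_def)
    ultimately show "e'' = e \<or> e'' = e'" using idx[of e'' xs] i by auto
  qed
qed

lemma maxp: "max_paths E s r om = M ` Vt"
  unfolding max_paths_def using max_edge_iff maxpaths_char by simp
lemma minp: "min_paths E s r om = m ` Vb"
  unfolding min_paths_def using min_edge_iff minpaths_char by simp

theorem vsetup_main:
  "\<exists>\<omega> \<phi>. is_ordering V E r \<omega> \<and> vershik_map E s r \<omega> \<phi> \<and>
           max_paths E s r \<omega> = M ` Vt \<and> min_paths E s r \<omega> = m ` Vb \<and>
           (\<forall>n\<ge>2. \<forall>w\<in>V. max_edge E r \<omega> n (et n w) \<and> min_edge E r \<omega> n (eb n w)) \<and>
           (\<forall>t\<in>Vt. \<phi> (M t) = m (\<sigma> t))"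
proof (intro exI conjI)
  show "is_ordering V E r om" by (rule is_ord)
  show "max_paths E s r om = M ` Vt" by (rule maxp)
  show "min_paths E s r om = m ` Vb" by (rule minp)
  show "\<forall>t\<in>Vt. phi (M t) = m (\<sigma> t)" using phi_M by blast
  show "\<forall>n\<ge>2. \<forall>w\<in>V. max_edge E r om n (et n w) \<and> min_edge E r om n (eb n w)"
  proof (intro allI impI ballI conjI)
    fix n :: nat and w assume n: "2 \<le> n" and w: "w \<in> V"
    have n1: "1 \<le> n" using n by simp
    show "max_edge E r om n (et n w)" using max_edge_iff[OF n1] et_in[OF n w] L2t[OF n w]
      by (simp add: ismax_def)
    show "min_edge E r om n (eb n w)" using min_edge_iff[OF n1] eb_in[OF n w] L2b[OF n w]
      by (simp add: ismin_def)
  qed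
  show "vershik_map E s r om phi" unfolding vershik_map_def
  proof (intro conjI ballI impI)
    have "homeomorphic_maps (path_top E s r) (path_top E s r) phi psi"
      unfolding homeomorphic_maps_def topspace_path_top
      using cont_crit[of E s r phi, OF phi_ps phi_cont] cont_crit[of E s r psi, OF psi_ps psi_cont]
        psi_phi phi_psi by blast
    thus "homeomorphic_map (path_top E s r) (path_top E s r) phi" using homeomorphic_map_maps by blast
    show "phi ` max_paths E s r om = min_paths E s r om"
      unfolding maxp minp
    proof -
      have "phi ` M ` Vt = m ` \<sigma> ` Vt" using phi_M by (simp add: image_image)
      also have "\<sigma> ` Vt = Vb" using sigma by (simp add: bij_betw_def)
      finally show "phi ` M ` Vt = m ` Vb" .
    qed
    fix x assume x: "x \<in> path_space E s r" and nx: "x \<notin> max_paths E s r om"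
    have nm: "\<not> (\<forall>i. ismax (Suc i) (x i))" using nx x unfolding max_paths_def using max_edge_iff by simp
    have L: "(LEAST i. \<not> max_edge E r om (Suc i) (x i)) = fnm x"
      unfolding fnm_def using max_edge_iff by simp
    define k where "k = fnm x"
    note P = phi_nonmax[OF x nm]
    have xk: "x k \<in> E (Suc k)" "\<not> ismax (Suc k) (x k)" using psD[OF x] fnm[OF nm] k_def by auto
    have succ: "is_succ om (Suc k) (x k) (phi x k)"
      using is_succ_iff[of "Suc k", OF _ xk(1) succ_props(1)[of "Suc k", OF _ xk]] P(1) k_def by simp
    show "let k = LEAST i. \<not> max_edge E r om (Suc i) (x i)
          in phi x \<in> path_space E s r \<and> (\<forall>i>k. phi x i = x i) \<and> is_succ om (Suc k) (x k) (phi x k) \<and>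
             (\<forall>i<k. min_edge E r om (Suc i) (phi x i))"
      unfolding L Let_def k_def[symmetric]
      using P(4) P(2) succ P(5) min_edge_iff k_def by simp
  qed
qed

end

lemma sum_incid:
  assumes fin: "finite (E (Suc n))" and W: "finite W"
    and f: "f (Suc n) u \<in> E (Suc n)" "r (Suc n) (f (Suc n) u) = u"
  shows "(\<Sum>w\<in>W. incid_t E s r f n u w) =
     card {e \<in> E (Suc n). r (Suc n) e = u \<and> e \<noteq> f (Suc n) u \<and> s (Suc n) e \<in> W}"
proof -
  define S where "S w = {e \<in> E (Suc n). s (Suc n) e = w \<and> r (Suc n) e = u \<and> e \<noteq> f (Suc n) u}" for w
  have eq: "incid_t E s r f n u w = card (S w)" for w
  proof (cases "s (Suc n) (f (Suc n) u) = w")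
    case True
    have "S w = {e \<in> E (Suc n). s (Suc n) e = w \<and> r (Suc n) e = u} - {f (Suc n) u}"
      by (auto simp: S_def)
    moreover have "f (Suc n) u \<in> {e \<in> E (Suc n). s (Suc n) e = w \<and> r (Suc n) e = u}" using f True by simp
    ultimately show ?thesis using fin True by (simp add: incid_t_def incid_def card_Diff_singleton)
  next
    case False
    have "S w = {e \<in> E (Suc n). s (Suc n) e = w \<and> r (Suc n) e = u}" using False by (auto simp: S_def)
    then show ?thesis using False by (simp add: incid_t_def incid_def)
  qed
  have "(\<Sum>w\<in>W. incid_t E s r f n u w) = (\<Sum>w\<in>W. card (S w))" using eq by simp
  also have "\<dots> = card (\<Union>w\<in>W. S w)"
    by (rule card_UN_disjoint[symmetric]) (use W fin in \<open>auto simp: S_def\<close>)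
  also have "(\<Union>w\<in>W. S w) = {e \<in> E (Suc n). r (Suc n) e = u \<and> e \<noteq> f (Suc n) u \<and> s (Suc n) e \<in> W}"
    by (auto simp: S_def)
  finally show ?thesis .
qed

lemma first_last: "finite S \<Longrightarrow> a \<in> S \<Longrightarrow> b \<in> S \<Longrightarrow> a \<noteq> b \<Longrightarrow>
   \<exists>xs. distinct xs \<and> set xs = S \<and> hd xs = a \<and> last xs = b"
proof -
  assume S: "finite S" "a \<in> S" "b \<in> S" "a \<noteq> b"
  obtain ys where ys: "distinct ys" "set ys = S - {a, b}" using finite_distinct_list[of "S - {a,b}"] S(1) by auto
  show ?thesis using ys S by (intro exI[of _ "a # ys @ [b]"]) auto
qed

lemma other_elem: "finite S \<Longrightarrow> 2 \<le> card S \<Longrightarrow> \<exists>y\<in>S. y \<noteq> x"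
proof (rule ccontr)
  assume "finite S" "2 \<le> card S" "\<not> (\<exists>y\<in>S. y \<noteq> x)"
  then have "S \<subseteq> {x}" by auto
  then have "card S \<le> 1" using card_mono[of "{x}" S] by simp
  then show False using \<open>2 \<le> card S\<close> by simp
qed

lemma level1_list:
  assumes S: "finite S" "2 \<le> card S" and a: "A \<Longrightarrow> a \<in> S" and b: "B \<Longrightarrow> b \<in> S" and ab: "A \<Longrightarrow> B \<Longrightarrow> a \<noteq> b"
  shows "\<exists>xs. distinct xs \<and> set xs = S \<and> (A \<longrightarrow> hd xs = a) \<and> (B \<longrightarrow> last xs = b)"
proof -
  obtain x0 where x0: "x0 \<in> S" using S by fastforce
  have "\<exists>a' b'. a' \<in> S \<and> b' \<in> S \<and> a' \<noteq> b' \<and> (A \<longrightarrow> a' = a) \<and> (B \<longrightarrow> b' = b)"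
  proof (cases A)
    case True
    show ?thesis
    proof (cases B)
      case True then show ?thesis using a b ab \<open>A\<close> by blast
    next
      case False
      obtain y where "y \<in> S" "y \<noteq> a" using other_elem[OF S] by blast
      then show ?thesis using a \<open>A\<close> False by blast
    qed
  next
    case False
    show ?thesis
    proof (cases B)
      case True
      obtain y where "y \<in> S" "y \<noteq> b" using other_elem[OF S] by blast
      then show ?thesis using b True False by blast
    next
      case False2: False
      obtain y where "y \<in> S" "y \<noteq> x0" using other_elem[OF S] by blast
      then show ?thesis using x0 False False2 by blast
    qed
  qed
  then obtain a' b' where "a' \<in> S" "b' \<in> S" "a' \<noteq> b'" "A \<longrightarrow> a' = a" "B \<longrightarrow> b' = b" by blast
  then show ?thesis using first_last[OF S(1), of a' b'] by blast
qed


lemma euler_level: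
  assumes finE: "finite (E (Suc n'))" and n1: "1 \<le> n'"
    and srcV: "\<And>e. e \<in> E (Suc n') \<Longrightarrow> s (Suc n') e \<in> V" and finV: "finite V"
    and skel: "skeleton V E s r Vt Vb M m vt vb et eb" and sigma: "bij_betw \<sigma> Vt Vb" and u: "u \<in> V"
    and psc: "pos_strongly_connected V E s r Vt Vb vt vb et \<sigma> n'"
    and bal: "\<forall>u\<in>V. \<forall>t\<in>Vt. (\<Sum>w\<in>{w\<in>V. vt w = t}. incid_t E s r et n' u w)
                        = (\<Sum>w\<in>{w\<in>V. vb w = \<sigma> t}. incid_t E s r eb n' u w)"
  shows "\<exists>xs. distinct xs \<and> set xs = rinv E r (Suc n') u \<and> hd xs = eb (Suc n') u \<and> last xs = et (Suc n') u
     \<and> successively (\<lambda>e e'. \<sigma> (vt (s (Suc n') e)) = vb (s (Suc n') e')) xs"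
proof -
  define n where "n = Suc n'"
  have n2: "2 \<le> n" using n1 by (simp add: n_def)
  define A where "A = rinv E r n u"
  define a0 where "a0 = eb n u"
  define a1 where "a1 = et n u"
  define h where "h = (\<lambda>e. vb (s n e))"
  define t where "t = (\<lambda>e. \<sigma> (vt (s n e)))"
  have finA: "finite A" using finE by (simp add: A_def rinv_def n_def)
  have sk: "\<And>w. w \<in> V \<Longrightarrow> vt w \<in> Vt \<and> vb w \<in> Vb" using skel by (auto simp: skeleton_def)
  have SK: "et n u \<in> rinv E r n u \<and> eb n u \<in> rinv E r n u \<and> et n u \<noteq> eb n u"
    using skel n2 u unfolding skeleton_def by blast
  have a0A: "a0 \<in> A" and a1A: "a1 \<in> A" and a01: "a0 \<noteq> a1"
    using SK by (auto simp: A_def a0_def a1_def)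
  have a0E: "a0 \<in> E n" "r n a0 = u" and a1E: "a1 \<in> E n" "r n a1 = u"
    using a0A a1A by (auto simp: A_def rinv_def)
  have AV: "\<And>e. e \<in> A \<Longrightarrow> s n e \<in> V" using srcV by (auto simp: A_def rinv_def n_def)
  have inj: "inj_on \<sigma> Vt" using sigma by (simp add: bij_betw_def)
  have sVt: "\<sigma> ` Vt = Vb" using sigma by (simp add: bij_betw_def)
  have I1: "(\<Sum>w\<in>W. incid_t E s r et n' u w) = card {e \<in> A - {a1}. s n e \<in> W}" if "W \<subseteq> V" for W
  proof -
    have "finite W" using finV that finite_subset by blast
    from sum_incid[where E=E and n=n' and W=W and f=et and u=u and s=s and r=r, OF finE this] a1E
    show ?thesis by (simp add: n_def A_def rinv_def a1_def)
  qed
  have I2: "(\<Sum>w\<in>W. incid_t E s r eb n' u w) = card {e \<in> A - {a0}. s n e \<in> W}" if "W \<subseteq> V" for W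
  proof -
    have "finite W" using finV that finite_subset by blast
    from sum_incid[where E=E and n=n' and W=W and f=eb and u=u and s=s and r=r, OF finE this] a0E
    show ?thesis by (simp add: n_def A_def rinv_def a0_def)
  qed
  have balt: "card {e \<in> A - {a1}. vt (s n e) = tt} = card {e \<in> A - {a0}. vb (s n e) = \<sigma> tt}" if tt: "tt \<in> Vt" for tt
  proof -
    have "card {e \<in> A - {a1}. s n e \<in> {w\<in>V. vt w = tt}} = card {e \<in> A - {a0}. s n e \<in> {w\<in>V. vb w = \<sigma> tt}}"
      using bal u tt I1[of "{w\<in>V. vt w = tt}"] I2[of "{w\<in>V. vb w = \<sigma> tt}"] by auto
    moreover have "{e \<in> A - {a1}. s n e \<in> {w\<in>V. vt w = tt}} = {e \<in> A - {a1}. vt (s n e) = tt}" using AV by auto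
    moreover have "{e \<in> A - {a0}. s n e \<in> {w\<in>V. vb w = \<sigma> tt}} = {e \<in> A - {a0}. vb (s n e) = \<sigma> tt}" using AV by auto
    ultimately show ?thesis by simp
  qed
  have balz: "card {a\<in>A-{a0}. h a = z} = card {a\<in>A-{a1}. t a = z}" for z
  proof (cases "z \<in> Vb")
    case True
    define tt where "tt = inv_into Vt \<sigma> z"
    have tt: "tt \<in> Vt" "\<sigma> tt = z" using True sVt by (auto simp: tt_def inv_into_into f_inv_into_f)
    have "{a\<in>A-{a1}. t a = z} = {a\<in>A-{a1}. vt (s n a) = tt}"
      using AV sk tt inj by (auto simp: t_def inj_on_def)
    then show ?thesis using balt[OF tt(1)] tt by (simp add: h_def)
  next
    case False
    have "{a\<in>A-{a0}. h a = z} = {}" using AV sk False by (auto simp: h_def)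
    moreover have "{a\<in>A-{a1}. t a = z} = {}" using AV sk False sVt by (auto simp: t_def)
    ultimately show ?thesis by (simp only:)
  qed
  define c where "c = (\<lambda>e. (vb (s n e), vt (s n e)))"
  define T where "T = {p \<in> H_verts V Vt Vb vt vb. crossing V E s r vt vb et n' u p > 0}"
  define Rel where "Rel = H_edges V Vt Vb vt vb \<sigma> \<inter> T \<times> T"
  have cross: "crossing V E s r vt vb et n' u p = card {e \<in> A - {a1}. c e = p}" for p
  proof -
    have "cell V vt vb (fst p) (snd p) \<subseteq> V" by (auto simp: cell_def)
    from I1[OF this] have "crossing V E s r vt vb et n' u p = card {e \<in> A - {a1}. s n e \<in> cell V vt vb (fst p) (snd p)}"
      by (simp add: crossing_def)
    moreover have "{e \<in> A - {a1}. s n e \<in> cell V vt vb (fst p) (snd p)} = {e \<in> A - {a1}. c e = p}"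
      using AV by (auto simp: cell_def c_def)
    ultimately show ?thesis by simp
  qed
  have T1: "c e \<in> T" if e: "e \<in> A - {a1}" for e
  proof -
    have "c e \<in> H_verts V Vt Vb vt vb" using AV[of e] sk[of "s n e"] e
      by (auto simp: H_verts_def c_def cell_def)
    moreover have "card {e' \<in> A - {a1}. c e' = c e} > 0"
      using e finA by (auto simp: card_gt_0_iff)
    ultimately show ?thesis by (simp add: T_def cross)
  qed
  have T2: "\<exists>e\<in>A-{a1}. c e = p" if "p \<in> T" for p
  proof -
    have "card {e \<in> A - {a1}. c e = p} > 0" using that by (simp add: T_def cross)
    then show ?thesis by (metis (mono_tags, lifting) card.empty empty_Collect_eq less_irrefl)
  qed
  have Redge: "\<sigma> (snd p) = fst q" if "(p, q) \<in> Rel" for p q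
    using that by (auto simp: Rel_def H_edges_def)
  have RT: "p \<in> T \<and> q \<in> T" if "(p, q) \<in> Rel" for p q using that by (auto simp: Rel_def)
  have conn: "(p, q) \<in> Rel\<^sup>*" if "p \<in> T" "q \<in> T" for p q
    using psc u that unfolding pos_strongly_connected_def Rel_def T_def Let_def by blast
  have cut: "\<exists>x\<in>U. \<exists>y\<in>(A-{a1})-U. t x = h y"
    if U: "a0 \<in> U" "U \<subseteq> A-{a1}" "U \<noteq> A-{a1}" for U
  proof (rule ccontr)
    assume nc: "\<not> (\<exists>x\<in>U. \<exists>y\<in>(A-{a1})-U. t x = h y)"
    have C: "y \<in> U" if "y \<in> A-{a1}" "x \<in> U" "t x = h y" for x y using nc that by blast
    have tc: "t e = \<sigma> (snd (c e))" "h e = fst (c e)" for e by (simp_all add: t_def h_def c_def)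
    have claim: "\<forall>y\<in>A-{a1}. c y = q \<longrightarrow> y \<in> U" if "(c a0, q) \<in> Rel\<^sup>+" for q
      using that
    proof (induction rule: trancl_induct)
      case (base q)
      show ?case
      proof (intro ballI impI)
        fix y assume y: "y \<in> A-{a1}" "c y = q"
        have "t a0 = h y" using Redge[OF base] y(2) tc by simp
        then show "y \<in> U" using C[OF y(1) U(1)] by simp
      qed
    next
      case (step p q)
      obtain x where x: "x \<in> A-{a1}" "c x = p" using T2 RT[OF step(2)] by blast
      have xU: "x \<in> U" using step(3) x by blast
      show ?case
      proof (intro ballI impI)
        fix y assume y: "y \<in> A-{a1}" "c y = q"
        have "t x = h y" using Redge[OF step(2)] y(2) x(2) tc by simp
        then show "y \<in> U" using C[OF y(1) xU] by simp
      qed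
    qed
    obtain y0 where y0: "y0 \<in> A-{a1}" "y0 \<notin> U" using U by blast
    have a0': "a0 \<in> A-{a1}" using a0A a01 by simp
    have Ta0: "c a0 \<in> T" using T1[OF a0'] .
    have Ty0: "c y0 \<in> T" using T1[OF y0(1)] .
    show False
    proof (cases "c y0 = c a0")
      case False
      have "(c a0, c y0) \<in> Rel\<^sup>*" using conn[OF Ta0 Ty0] .
      hence "(c a0, c y0) \<in> Rel\<^sup>+" using False by (auto simp: rtrancl_eq_or_trancl)
      then show False using claim y0 by blast
    next
      case True
      show False
      proof (cases "\<exists>q\<in>T. q \<noteq> c a0")
        case True
        then obtain q where q: "q \<in> T" "q \<noteq> c a0" by blast
        have "(c a0, q) \<in> Rel\<^sup>+" using conn[OF Ta0 q(1)] q(2) by (auto simp: rtrancl_eq_or_trancl)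
        moreover have "(q, c a0) \<in> Rel\<^sup>+" using conn[OF q(1) Ta0] q(2) by (auto simp: rtrancl_eq_or_trancl)
        ultimately have "(c a0, c a0) \<in> Rel\<^sup>+" by (rule trancl_trans)
        then show False using claim y0 \<open>c y0 = c a0\<close> by blast
      next
        case False
        hence allc: "\<forall>a\<in>A-{a1}. c a = c a0" using T1 by blast
        have "y0 \<in> {a\<in>A-{a0}. h a = h y0}" using y0 U(1) by auto
        hence "card {a\<in>A-{a0}. h a = h y0} > 0" using finA by (auto simp: card_gt_0_iff)
        hence "card {a\<in>A-{a1}. t a = h y0} > 0" using balz by simp
        then obtain a where a: "a \<in> A-{a1}" "t a = h y0"
          by (metis (mono_tags, lifting) card.empty empty_Collect_eq less_irrefl)
        have "t a = t a0" using allc a(1) tc by simp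
        then show False using C[OF y0(1) U(1)] a(2) y0(2) by simp
      qed
    qed
  qed
  obtain xs where xs: "distinct xs" "set xs = A" "hd xs = a0" "last xs = a1" "successively (\<lambda>x y. t x = h y) xs"
    using euler_trail[OF finA a0A a1A a01 balz cut] by blast
  show ?thesis using xs by (auto simp: n_def A_def a0_def a1_def t_def h_def)
qed


theorem mainTheorem15:
  fixes d :: nat and v0 :: 'v and V :: "'v set" and E :: "nat \<Rightarrow> 'e set"
    and s r :: "nat \<Rightarrow> 'e \<Rightarrow> 'v"
    and Vt Vb :: "'v set" and M m :: "'v \<Rightarrow> nat \<Rightarrow> 'e" and vt vb :: "'v \<Rightarrow> 'v"
    and et eb :: "nat \<Rightarrow> 'v \<Rightarrow> 'e" and \<sigma> :: "'v \<Rightarrow> 'v"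
  assumes BD: "strict_rank_BD d v0 V E s r"
    and simple: "simple_BD v0 V E s r"
    and skel: "skeleton V E s r Vt Vb M m vt vb et eb"
    and sigma: "bij_betw \<sigma> Vt Vb"
    and eventually: "\<exists>N. \<forall>n\<ge>N.
          pos_strongly_connected V E s r Vt Vb vt vb et \<sigma> n \<and>
          (\<forall>u\<in>V. \<forall>t\<in>Vt. (\<Sum>w\<in>{w\<in>V. vt w = t}. incid_t E s r et n u w)
                        = (\<Sum>w\<in>{w\<in>V. vb w = \<sigma> t}. incid_t E s r eb n u w))"
  shows "\<exists>\<omega> \<phi>. is_ordering V E r \<omega> \<and> vershik_map E s r \<omega> \<phi> \<and>
           max_paths E s r \<omega> = M ` Vt \<and> min_paths E s r \<omega> = m ` Vb \<and>
           (\<forall>n\<ge>2. \<forall>w\<in>V. max_edge E r \<omega> n (et n w) \<and> min_edge E r \<omega> n (eb n w)) \<and>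
           (\<forall>t\<in>Vt. \<phi> (M t) = m (\<sigma> t))"
proof -
  have finV: "finite V" using BD by (simp add: strict_rank_BD_def)
  have finE: "\<And>n. 1 \<le> n \<Longrightarrow> finite (E n)" using BD by (simp add: strict_rank_BD_def)
  have Erng: "\<And>n e. 1 \<le> n \<Longrightarrow> e \<in> E n \<Longrightarrow> r n e \<in> V" using BD by (simp add: strict_rank_BD_def)
  have card2: "\<And>n v. 1 \<le> n \<Longrightarrow> v \<in> V \<Longrightarrow> 2 \<le> card (rinv E r n v)" using BD by (simp add: strict_rank_BD_def)
  have Esrc: "\<And>n e. 2 \<le> n \<Longrightarrow> e \<in> E n \<Longrightarrow> s n e \<in> V"
  proof -
    fix n e assume n: "2 \<le> n" and e: "e \<in> E n"
    have "s n e \<in> lvl v0 V (n - 1)" using BD n e by (simp add: strict_rank_BD_def)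
    thus "s n e \<in> V" using n by (simp add: lvl_def)
  qed
  obtain N where hN: "\<And>n. N \<le> n \<Longrightarrow> pos_strongly_connected V E s r Vt Vb vt vb et \<sigma> n \<and>
          (\<forall>u\<in>V. \<forall>t\<in>Vt. (\<Sum>w\<in>{w\<in>V. vt w = t}. incid_t E s r et n u w)
                        = (\<Sum>w\<in>{w\<in>V. vb w = \<sigma> t}. incid_t E s r eb n u w))"
    using eventually by blast
  define K where "K = Suc (max N 1)"
  have K2: "2 \<le> K" by (simp add: K_def)
  define Q where "Q n u xs \<longleftrightarrow> distinct xs \<and> set xs = rinv E r n u \<and>
     (n = 1 \<longrightarrow> (u \<in> Vt \<longrightarrow> last xs = M u 0) \<and> (u \<in> Vb \<longrightarrow> hd xs = m u 0)) \<and>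
     (2 \<le> n \<longrightarrow> hd xs = eb n u \<and> last xs = et n u) \<and>
     (K \<le> n \<longrightarrow> successively (\<lambda>e e'. \<sigma> (vt (s n e)) = vb (s n e')) xs)" for n u xs
  have SK: "\<And>n w. 2 \<le> n \<Longrightarrow> w \<in> V \<Longrightarrow> et n w \<in> rinv E r n w \<and> eb n w \<in> rinv E r n w \<and> et n w \<noteq> eb n w"
    using skel unfolding skeleton_def by blast
  have ex: "\<exists>xs. Q n u xs" if n: "1 \<le> n" and u: "u \<in> V" for n u
  proof -
    have finR: "finite (rinv E r n u)" using finE[OF n] by (simp add: rinv_def)
    consider "n = 1" | "2 \<le> n" "n < K" | "K \<le> n" using n by linarith
    then show ?thesis
    proof cases
      case 1
      have mA: "u \<in> Vb \<Longrightarrow> m u 0 \<in> rinv E r n u"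
        using skel 1 by (auto simp: skeleton_def rinv_def path_space_def)
      have MB: "u \<in> Vt \<Longrightarrow> M u 0 \<in> rinv E r n u"
        using skel 1 by (auto simp: skeleton_def rinv_def path_space_def)
      have dj: "\<forall>v\<in>Vt \<inter> Vb. \<forall>i. M v i \<noteq> m v i" using skel unfolding skeleton_def by blast
      have ab: "u \<in> Vb \<Longrightarrow> u \<in> Vt \<Longrightarrow> m u 0 \<noteq> M u 0"
        using dj by (metis IntI)
      obtain xs where xs: "distinct xs" "set xs = rinv E r n u" "u \<in> Vb \<longrightarrow> hd xs = m u 0" "u \<in> Vt \<longrightarrow> last xs = M u 0"
        using level1_list[OF finR card2[OF n u], of "u \<in> Vb" "m u 0" "u \<in> Vt" "M u 0"] mA MB ab by blast
      show ?thesis using xs 1 K2 unfolding Q_def by (intro exI[of _ xs]) auto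
    next
      case 2
      obtain xs where xs: "distinct xs" "set xs = rinv E r n u" "hd xs = eb n u" "last xs = et n u"
        using first_last[OF finR, of "eb n u" "et n u"] SK[OF 2(1) u] by metis
      show ?thesis using xs 2 unfolding Q_def by (intro exI[of _ xs]) auto
    next
      case 3
      obtain n' where n': "n = Suc n'" "N \<le> n'" "1 \<le> n'" using 3 unfolding K_def
        by (metis Suc_le_D Suc_le_mono max.bounded_iff)
      have srcV: "\<And>e. e \<in> E (Suc n') \<Longrightarrow> s (Suc n') e \<in> V" using Esrc n' by simp
      obtain xs where xs: "distinct xs" "set xs = rinv E r n u" "hd xs = eb n u" "last xs = et n u"
          "successively (\<lambda>e e'. \<sigma> (vt (s n e)) = vb (s n e')) xs"
        using euler_level[OF finE[of "Suc n'"] n'(3) srcV finV skel sigma u]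
          hN[OF n'(2)] n'(1) by auto
      show ?thesis using xs 3 K2 unfolding Q_def by (intro exI[of _ xs]) auto
    qed
  qed
  define L where "L n u = (SOME xs. Q n u xs)" for n u
  have LQ: "Q n u (L n u)" if "1 \<le> n" "u \<in> V" for n :: nat and u
    unfolding L_def using ex[OF that] by (rule someI_ex)
  have vs: "vsetup V E s r Vt Vb M m vt vb et eb \<sigma> L K"
  proof (unfold_locales)
    show "skeleton V E s r Vt Vb M m vt vb et eb" by (rule skel)
    show "bij_betw \<sigma> Vt Vb" by (rule sigma)
    show "2 \<le> K" by (rule K2)
    show "\<And>n e. 1 \<le> n \<Longrightarrow> e \<in> E n \<Longrightarrow> r n e \<in> V" by (rule Erng)
    show "\<And>n e. 2 \<le> n \<Longrightarrow> e \<in> E n \<Longrightarrow> s n e \<in> V" by (rule Esrc)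
    show "\<And>n u. 1 \<le> n \<Longrightarrow> u \<in> V \<Longrightarrow> distinct (L n u)" using LQ by (simp add: Q_def)
    show "\<And>n u. 1 \<le> n \<Longrightarrow> u \<in> V \<Longrightarrow> set (L n u) = rinv E r n u" using LQ by (simp add: Q_def)
    show "\<And>n u. 1 \<le> n \<Longrightarrow> u \<in> V \<Longrightarrow> L n u \<noteq> []"
    proof -
      fix n :: nat and u assume n: "1 \<le> n" and u: "u \<in> V"
      have "2 \<le> card (set (L n u))" using LQ[OF n u] card2[OF n u] by (simp add: Q_def)
      thus "L n u \<noteq> []" by auto
    qed
    have VtV: "Vt \<subseteq> V" and VbV: "Vb \<subseteq> V" using skel by (auto simp: skeleton_def)
    show "\<And>u. u \<in> Vt \<Longrightarrow> last (L 1 u) = M u 0" using LQ[of 1] VtV by (auto simp: Q_def)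
    show "\<And>u. u \<in> Vb \<Longrightarrow> hd (L 1 u) = m u 0" using LQ[of 1] VbV by (auto simp: Q_def)
    show "\<And>n u. 2 \<le> n \<Longrightarrow> u \<in> V \<Longrightarrow> last (L n u) = et n u" using LQ by (simp add: Q_def)
    show "\<And>n u. 2 \<le> n \<Longrightarrow> u \<in> V \<Longrightarrow> hd (L n u) = eb n u" using LQ by (simp add: Q_def)
    show "\<And>n u. K \<le> n \<Longrightarrow> u \<in> V \<Longrightarrow> successively (\<lambda>e e'. \<sigma> (vt (s n e)) = vb (s n e')) (L n u)"
      using LQ K2 by (simp add: Q_def)
  qed
  show ?thesis by (rule vsetup.vsetup_main[OF vs])
qed


end
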